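(* Under assumptions (B) and (F), let $h:\mathbb{R}\to\mathbb{R}$ be $a$-Lipschitz, i.e. $|h(x)-h(y)|\le C_h|a(x)-a(y)|$. Then there is a constant $C$ (not depending on $N$, $i$, $s$, $t$) such that for all $N\ge1$, $1\le i\le N$ and all $s,t\ge0$ with $|s-t|\le1$, $$E\big(|h(X^{N,i}_t)-h(X^{N,i}_s)|\big)\le C|t-s|^{q/\alpha}.$$
   Context: Fix $\alpha\in(0,1)$; $\nu$ is the law on $\mathbb{R}_+$ of $Y\ge0$ with $E[e^{-\lambda Y}]=e^{-\lambda^\alpha}$. Fix $0<q<\alpha$ and a $C^2$ odd function $a$ with $a(0)=0$, concave on $\mathbb{R}_+$, $a''/a'$ bounded, Lipschitz, strictly increasing, $a(x)=c+x^q$ for $x\ge1$. $\Pi(\mu,\tilde\mu)$: couplings; $\mu(f)=\int fd\mu$. Assumption (B): $b:\mathbb{R}_+\times\mathcal P_1(\mathbb{R})\to\mathbb{R}$ measurable, bounded, $b(0,\mu)\ge0$, $|b(x,\mu)-b(\tilde x,\tilde\mu)|\le C\big(|a(x)-a(\tilde x)|+\inf_{\pi\in\Pi(\mu,\tilde\mu)}\int|a(y)-a(y')|\pi(dy,dy')\big)$. Assumption (F): $f:\mathbb{R}\to\mathbb{R}_+$ bounded, Lipschitz, $f\ge\underline f>0$; $\psi:\mathbb{R}\to\mathbb{R}_+$ bounded, nonnegative, Lipschitz; $|f(x)-f(y)|+|\psi(x)-\psi(y)|\le C|a(x)-a(y)|$ for $x,y\ge0$; $\nu_0$ probability on $\mathbb{R}_+$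 with finite moment of order $\max(2\alpha,1)$, $\nu_0(\{0\})=0$. Finite system: $(\pi^i)_{i\ge1}$ i.i.d. Poisson random measures on $\mathbb{R}_+^3$ with intensity $ds\,dz\,\nu(du)$, $(X^i_0)$ i.i.d. $\sim\nu_0$ independent; $X^{N,i}_t=X^i_0+\int_0^t b(X^{N,i}_s,\mu^N_s)ds+\int\psi(X^{N,i}_{s-})\mathbf 1_{\{z\le f(X^{N,i}_{s-})\}}\pi^i(ds,dz,du)+N^{-1/\alpha}\sum_{j\ne i}\int u\mathbf 1_{\{z\le f(X^{N,j}_{s-})\}}\pi^j(ds,dz,du)$ (integrals over $[0,t]\times\mathbb{R}_+^2$), $\mu^N_t=\frac1N\sum_i\delta_{X^{N,i}_t}$. *)

theory Defs
  imports "HOL-Probability.Probability"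
begin

definition leftlim :: "(real \<Rightarrow> real) \<Rightarrow> real \<Rightarrow> real" where
  "leftlim g s = (if s \<le> 0 then g 0 else Lim (at_left s) g)"

definition cadlag :: "(real \<Rightarrow> real) \<Rightarrow> bool" where
  "cadlag g \<longleftrightarrow> (\<forall>t\<ge>0. continuous (at_right t) g) \<and> (\<forall>t>0. \<exists>l. (g \<longlongrightarrow> l) (at_left t))"

text \<open>Empirical measure (1/N) sum_{j=1..N} delta_{x j}.\<close>
definition empirical :: "nat \<Rightarrow> (nat \<Rightarrow> real) \<Rightarrow> real measure" where
  "empirical N x = distr (uniform_measure (count_space UNIV) {1..N}) borel x"

definition P1_meas :: "real measure set" where
  "P1_meas = {\<mu>. sets \<mu> = sets borel \<and> prob_space \<mu> \<and> integrable \<mu> (\<lambda>x. x)}"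

definition couplings_of :: "real measure \<Rightarrow> real measure \<Rightarrow> (real \<times> real) measure set" where
  "couplings_of \<mu> \<mu>' = {p. sets p = sets borel \<and> distr p borel fst = \<mu> \<and> distr p borel snd = \<mu>'}"

definition Wa :: "(real \<Rightarrow> real) \<Rightarrow> real measure \<Rightarrow> real measure \<Rightarrow> ennreal" where
  "Wa a \<mu> \<mu>' = (INF p\<in>couplings_of \<mu> \<mu>'. \<integral>\<^sup>+ yy. ennreal \<bar>a (fst yy) - a (snd yy)\<bar> \<partial>p)"

definition intensity :: "real measure \<Rightarrow> (real \<times> real \<times> real) measure" where
  "intensity \<nu> = density (lborel \<Otimes>\<^sub>M (lborel \<Otimes>\<^sub>M \<nu>)) (indicator ({0..} \<times> {0..} \<times> UNIV))"

definition poisson_random_measure :: "'w measure \<Rightarrow> 'b measure \<Rightarrow> ('w \<Rightarrow> 'b measure) \<Rightarrow> bool" where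
  "poisson_random_measure M L P \<longleftrightarrow>
     (\<forall>\<omega>\<in>space M. sets (P \<omega>) = sets L) \<and>
     (\<forall>A\<in>sets L. (\<lambda>\<omega>. emeasure (P \<omega>) A) \<in> borel_measurable M) \<and>
     (\<forall>A\<in>sets L. emeasure L A < \<infinity> \<longrightarrow>
        (\<forall>k::nat. measure M {\<omega>\<in>space M. emeasure (P \<omega>) A = of_nat k}
            = exp (- enn2real (emeasure L A)) * enn2real (emeasure L A) ^ k / fact k)) \<and>
     (\<forall>A\<in>sets L. emeasure L A = \<infinity> \<longrightarrow> (AE \<omega> in M. emeasure (P \<omega>) A = \<infinity>)) \<and>
     (\<forall>A::nat \<Rightarrow> 'b set. range A \<subseteq> sets L \<longrightarrow> disjoint_family A \<longrightarrow>
        prob_space.indep_vars M (\<lambda>_. borel) (\<lambda>j \<omega>. emeasure (P \<omega>) (A j)) UNIV)"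

definition prm_sigma :: "'w measure \<Rightarrow> 'b measure \<Rightarrow> ('w \<Rightarrow> 'b measure) \<Rightarrow> 'w set set" where
  "prm_sigma M L P = sigma_sets (space M)
     (\<Union>A\<in>sets L. \<Union>B\<in>sets (borel :: ennreal measure). {(\<lambda>\<omega>. emeasure (P \<omega>) A) -` B \<inter> space M})"

definition ownJ :: "(real \<Rightarrow> real) \<Rightarrow> (real \<Rightarrow> real) \<Rightarrow> (real \<Rightarrow> real) \<Rightarrow> real
                    \<Rightarrow> (real \<times> real \<times> real) measure \<Rightarrow> ennreal" where
  "ownJ \<psi> f g t Q = (\<integral>\<^sup>+ x. (case x of (s, z, u) \<Rightarrow>
      indicator ({0..t} \<times> {0..} \<times> {0..}) (s, z, u) * ennreal (\<psi> (leftlim g s))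
      * indicator {..f (leftlim g s)} z) \<partial>Q)"

definition crossJ :: "(real \<Rightarrow> real) \<Rightarrow> (real \<Rightarrow> real) \<Rightarrow> real
                    \<Rightarrow> (real \<times> real \<times> real) measure \<Rightarrow> ennreal" where
  "crossJ f g t Q = (\<integral>\<^sup>+ x. (case x of (s, z, u) \<Rightarrow>
      indicator ({0..t} \<times> {0..} \<times> {0..}) (s, z, u) * ennreal u
      * indicator {..f (leftlim g s)} z) \<partial>Q)"

definition particle_solution ::
  "'w measure \<Rightarrow> (real \<Rightarrow> real measure \<Rightarrow> real) \<Rightarrow> (real \<Rightarrow> real) \<Rightarrow> (real \<Rightarrow> real) \<Rightarrow> real
   \<Rightarrow> (nat \<Rightarrow> 'w \<Rightarrow> (real \<times> real \<times> real) measure) \<Rightarrow> (nat \<Rightarrow> 'w \<Rightarrow> real) \<Rightarrow> nat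
   \<Rightarrow> (nat \<Rightarrow> real \<Rightarrow> 'w \<Rightarrow> real) \<Rightarrow> bool" where
  "particle_solution M b f \<psi> \<alpha> \<pi> X0 N Y \<longleftrightarrow>
     (\<forall>i\<in>{1..N}. \<forall>t\<ge>0. Y i t \<in> borel_measurable M) \<and>
     (AE \<omega> in M. \<forall>i\<in>{1..N}. cadlag (\<lambda>t. Y i t \<omega>) \<and>
        (\<forall>t\<ge>0.
           set_integrable lborel {0..t} (\<lambda>s. b (Y i s \<omega>) (empirical N (\<lambda>j. Y j s \<omega>))) \<and>
           ownJ \<psi> f (\<lambda>s. Y i s \<omega>) t (\<pi> i \<omega>) < \<infinity> \<and>
           (\<forall>j\<in>{1..N}. crossJ f (\<lambda>s. Y j s \<omega>) t (\<pi> j \<omega>) < \<infinity>) \<and>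
           Y i t \<omega> = X0 i \<omega>
             + (LINT s:{0..t}|lborel. b (Y i s \<omega>) (empirical N (\<lambda>j. Y j s \<omega>)))
             + enn2real (ownJ \<psi> f (\<lambda>s. Y i s \<omega>) t (\<pi> i \<omega>))
             + real N powr (-1/\<alpha>) * (\<Sum>j\<in>{1..N}-{i}. enn2real (crossJ f (\<lambda>s. Y j s \<omega>) t (\<pi> j \<omega>)))))"

end

theory Submission
  imports Defs
begin

lemma powr_subadd:
  fixes x y q :: real
  assumes "0 \<le> x" "0 \<le> y" "0 < q" "q \<le> 1"
  shows "(x + y) powr q \<le> x powr q + y powr q"
proof (cases "x + y = 0")
  case True then have "x = 0" "y = 0" using assms by auto
  then show ?thesis by simp
next
  case False
  then have s: "x + y > 0" using assms by auto
  have h1: "x / (x+y) \<le> (x/(x+y)) powr q"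
  proof -
    have "0 \<le> x/(x+y)" "x/(x+y) \<le> 1" using assms s by auto
    then show ?thesis using assms
      by (metis powr_mono' powr_one_gt_zero_iff eq_iff le_less powr_one powr_zero_eq_one)
  qed
  have h2: "y / (x+y) \<le> (y/(x+y)) powr q"
  proof -
    have "0 \<le> y/(x+y)" "y/(x+y) \<le> 1" using assms s by auto
    then show ?thesis using assms
      by (metis powr_mono' powr_one_gt_zero_iff eq_iff le_less powr_one powr_zero_eq_one)
  qed
  have "1 = x/(x+y) + y/(x+y)" using s by (simp add: add_divide_distrib[symmetric])
  also have "\<dots> \<le> (x/(x+y)) powr q + (y/(x+y)) powr q" using h1 h2 by simp
  also have "\<dots> = (x powr q + y powr q) / (x+y) powr q"
    using assms s by (simp add: powr_divide add_divide_distrib)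
  finally show ?thesis using s by (simp add: le_divide_eq)
qed


definition ppow :: "real \<Rightarrow> ennreal \<Rightarrow> ennreal" where
  "ppow q x = (if x = \<top> then \<top> else ennreal (enn2real x powr q))"

lemma ppow_ennreal: "0 \<le> x \<Longrightarrow> ppow q (ennreal x) = ennreal (x powr q)"
  by (simp add: ppow_def)

lemma ppow_top[simp]: "ppow q \<top> = \<top>" by (simp add: ppow_def)
lemma ppow_zero[simp]: "ppow q 0 = 0" by (simp add: ppow_def)

lemma ppow_mono:
  assumes "0 < q" "x \<le> y" shows "ppow q x \<le> ppow q y"
proof (cases "y = \<top>")
  case True then show ?thesis by simp
next
  case False
  then have "x \<noteq> \<top>" using assms top.extremum_unique by fastforce
  obtain a where "x = ennreal a" "0 \<le> a" using \<open>x \<noteq> \<top>\<close> by (cases x) auto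
  obtain b where "y = ennreal b" "0 \<le> b" using False by (cases y) auto
  moreover have "a \<le> b" using \<open>x = ennreal a\<close> \<open>y = ennreal b\<close> \<open>0 \<le> b\<close> assms(2) by simp
  ultimately show ?thesis using assms \<open>x = ennreal a\<close> \<open>0 \<le> a\<close>
    by (simp add: ppow_def ennreal_leI powr_mono2)
qed

lemma ppow_add:
  assumes "0 < q" "q \<le> 1" shows "ppow q (x + y) \<le> ppow q x + ppow q y"
proof (cases "x = \<top> \<or> y = \<top>")
  case True then show ?thesis by auto
next
  case False
  then obtain a b where ab: "x = ennreal a" "y = ennreal b" "0 \<le> a" "0 \<le> b"
    by (cases x; cases y) auto
  then have "ppow q (x + y) = ennreal ((a+b) powr q)"
    by (simp add: ppow_def ennreal_plus[symmetric] del: ennreal_plus)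
  also have "\<dots> \<le> ennreal (a powr q + b powr q)"
    using powr_subadd[of a b q] ab assms by (intro ennreal_leI) auto
  also have "\<dots> = ppow q x + ppow q y" using ab by (simp add: ppow_def ennreal_plus)
  finally show ?thesis .
qed

lemma ppow_sum:
  assumes "0 < q" "q \<le> 1" shows "ppow q (\<Sum>i\<in>I. f i) \<le> (\<Sum>i\<in>I. ppow q (f i))"
proof (induction I rule: infinite_finite_induct)
  case (infinite A) then show ?case by simp
next
  case empty then show ?case by simp
next
  case (insert x F)
  have "ppow q (sum f (insert x F)) = ppow q (f x + sum f F)" using insert by simp
  also have "\<dots> \<le> ppow q (f x) + ppow q (sum f F)" by (rule ppow_add[OF assms])
  also have "\<dots> \<le> ppow q (f x) + sum (\<lambda>i. ppow q (f i)) F" by (rule add_left_mono[OF insert(3)])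
  finally show ?case using insert by simp
qed

lemma ppow_cmult:
  assumes "0 < q" "0 \<le> c" shows "ppow q (ennreal c * x) = ennreal (c powr q) * ppow q x"
proof (cases "x = \<top>")
  case True
  then show ?thesis using assms
    by (cases "c = 0") (auto simp: ppow_def ennreal_mult_top)
next
  case False
  then obtain a where "x = ennreal a" "0 \<le> a" by (cases x) auto
  then show ?thesis using assms
    by (simp add: ppow_def ennreal_mult[symmetric] powr_mult del: ennreal_mult)
qed

lemma ppow_nat:
  assumes "0 < q" "q \<le> 1" shows "ppow q (of_nat k) \<le> of_nat k"
proof -
  have "real k powr q \<le> real k"
  proof (cases "k = 0")
    case True then show ?thesis by simp
  next
    case False then have "1 \<le> real k" by simp
    then show ?thesis using assms powr_mono[of q 1 "real k"] by simp
  qed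
  then show ?thesis
    using ppow_ennreal[of "real k" q] by (simp add: ennreal_of_nat_eq_real_of_nat ennreal_leI)
qed

lemma ppow_eps:
  assumes "0 < q" "q \<le> 1" "0 < e"
  shows "ppow q x \<le> ennreal (e powr q) + ennreal (e powr (q - 1)) * x"
proof (cases "x = \<top>")
  case True
  then show ?thesis using assms by (simp add: ennreal_mult_top)
next
  case False
  then obtain a where a: "x = ennreal a" "0 \<le> a" by (cases x) auto
  have "a powr q \<le> e powr q + e powr (q - 1) * a"
  proof (cases "a \<le> e")
    case True
    then have "a powr q \<le> e powr q" using assms a powr_mono2 by auto
    moreover have "0 \<le> e powr (q - 1) * a" using a by simp
    ultimately show ?thesis by linarith
  next
    case False
    then have ap: "0 < a" using assms by simp
    have "a powr q = a powr (q - 1) * a" using ap by (simp add: powr_diff)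
    also have "\<dots> \<le> e powr (q - 1) * a"
      using False assms ap by (intro mult_right_mono powr_mono2') auto
    finally show ?thesis using powr_ge_zero[of e q] by linarith
  qed
  then show ?thesis using a assms
    by (simp add: ppow_def ennreal_mult[symmetric] ennreal_plus[symmetric] ennreal_leI
        del: ennreal_plus ennreal_mult)
qed

lemma lt1: "0 \<le> (x::real) \<Longrightarrow> 0 < q \<Longrightarrow> x powr q < 1 \<Longrightarrow> x < 1"
  using ge_one_powr_ge_zero[of x q] by (meson less_le_not_le not_le_imp_less)
lemma le_pow: "0 \<le> (x::real) \<Longrightarrow> x < 1 \<Longrightarrow> 0 < q \<Longrightarrow> q \<le> 1 \<Longrightarrow> x \<le> x powr q"
proof (cases "x = 0")
  case False
  assume "0 \<le> x" "x < 1" "0 < q" "q \<le> 1"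
  then have "x powr 1 \<le> x powr q" using powr_mono'[of q 1 x] by auto
  then show ?thesis using False \<open>0 \<le> x\<close> by simp
qed simp

lemma ppow_suminf:
  assumes q: "0 < q" "q \<le> 1"
  shows "ppow q (\<Sum>i. f i) \<le> (\<Sum>i. ppow q (f i))"
proof (cases "\<exists>i. f i = \<top>")
  case True
  then obtain i where "f i = \<top>" by auto
  then have "ppow q (f i) = \<top>" by simp
  moreover have "ppow q (f i) \<le> (\<Sum>i. ppow q (f i))"
    using sum_le_suminf[of "\<lambda>i. ppow q (f i)" "{i}"] by auto
  ultimately show ?thesis by (simp add: top_unique)
next
  case False
  define g where "g i = enn2real (f i)" for i
  have g0: "\<And>i. 0 \<le> g i" by (simp add: g_def)
  have fg: "f i = ennreal (g i)" for i using False by (cases "f i") (auto simp: g_def)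
  have pg: "ppow q (f i) = ennreal (g i powr q)" for i using fg g0 by (simp add: ppow_ennreal)
  show ?thesis
  proof (cases "summable g")
    case True
    then have S: "(\<Sum>i. f i) = ennreal (\<Sum>i. g i)" using fg g0 by (simp add: suminf_ennreal2)
    have lhs: "ppow q (\<Sum>i. f i) = ennreal ((\<Sum>i. g i) powr q)"
      using S g0 True by (simp add: ppow_ennreal suminf_nonneg)
    show ?thesis
    proof (cases "summable (\<lambda>i. g i powr q)")
      case True
      have "(\<Sum>i. g i) powr q \<le> (\<Sum>i. g i powr q)"
      proof (rule LIMSEQ_le_const2)
        show "(\<lambda>n. (\<Sum>i<n. g i) powr q) \<longlonglongrightarrow> (\<Sum>i. g i) powr q"
        proof (rule tendsto_powr2)
          show "(\<lambda>n. (\<Sum>i<n. g i)) \<longlonglongrightarrow> (\<Sum>i. g i)" using \<open>summable g\<close> by (rule summable_LIMSEQ)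
          show "\<forall>\<^sub>F x in sequentially. 0 \<le> (\<Sum>i<x. g i)" using g0 by (simp add: sum_nonneg)
        qed (use q in auto)
        show "\<exists>N. \<forall>n\<ge>N. (\<Sum>i<n. g i) powr q \<le> (\<Sum>i. g i powr q)"
        proof (intro exI allI impI)
          fix n :: nat
          have "(\<Sum>i<n. g i) powr q \<le> (\<Sum>i<n. g i powr q)"
          proof (induction n)
            case 0 then show ?case by simp
          next
            case (Suc n)
            have "(\<Sum>i<Suc n. g i) powr q = ((\<Sum>i<n. g i) + g n) powr q" by simp
            also have "\<dots> \<le> (\<Sum>i<n. g i) powr q + g n powr q"
              using powr_subadd[of "(\<Sum>i<n. g i)" "g n" q] g0 q by (simp add: sum_nonneg)
            also have "\<dots> \<le> (\<Sum>i<Suc n. g i powr q)" using Suc by simp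
            finally show ?case .
          qed
          also have "\<dots> \<le> (\<Sum>i. g i powr q)"
            using True by (intro sum_le_suminf) auto
          finally show "(\<Sum>i<n. g i) powr q \<le> (\<Sum>i. g i powr q)" .
        qed
      qed
      note le = this
      have eq: "(\<Sum>i. ppow q (f i)) = ennreal (\<Sum>i. g i powr q)"
        unfolding pg using True by (intro suminf_ennreal2) auto
      show ?thesis unfolding lhs eq by (rule ennreal_leI[OF le])
    next
      case False
      have "(\<Sum>i. ennreal (g i powr q)) = \<top>"
      proof (rule ccontr)
        assume "(\<Sum>i. ennreal (g i powr q)) \<noteq> \<top>"
        then have "summable (\<lambda>i. g i powr q)" by (intro summable_suminf_not_top) auto
        then show False using False by blast
      qed
      then show ?thesis using pg by simp
    qed
  next
    case False
    have "\<not> summable (\<lambda>i. g i powr q)"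
    proof
      assume sq: "summable (\<lambda>i. g i powr q)"
      then have "(\<lambda>i. g i powr q) \<longlonglongrightarrow> 0" by (rule summable_LIMSEQ_zero)
      then have "eventually (\<lambda>i. g i powr q < 1) sequentially"
        by (rule order_tendstoD) simp
      then have "eventually (\<lambda>i. norm (g i) \<le> g i powr q) sequentially"
      proof (rule eventually_mono)
        fix i assume "g i powr q < 1"
        then have "g i < 1" using g0[of i] q lt1 by blast
        then show "norm (g i) \<le> g i powr q" using g0[of i] q le_pow by simp
      qed
      then have "summable g" using sq by (rule summable_comparison_test_ev)
      then show False using False by simp
    qed
      have "(\<Sum>i. ennreal (g i powr q)) = \<top>"
    proof (rule ccontr)
      assume "(\<Sum>i. ennreal (g i powr q)) \<noteq> \<top>"
      then have "summable (\<lambda>i. g i powr q)" by (intro summable_suminf_not_top) auto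
      then show False using \<open>\<not> summable (\<lambda>i. g i powr q)\<close> by blast
    qed
    then show ?thesis using pg by simp
  qed
qed


lemma a_nonneg: "strict_mono (a::real\<Rightarrow>real) \<Longrightarrow> a 0 = 0 \<Longrightarrow> 0 \<le> x \<Longrightarrow> 0 \<le> a x"
  by (metis order.order_iff_strict strict_mono_less)

lemma concave_scale:
  fixes a :: "real \<Rightarrow> real" assumes cc: "concave_on {0..} a" and a0: "a 0 = (0::real)" and t: "0 \<le> t" "t \<le> 1" and v: "0 \<le> v"
  shows "t * a v \<le> a (t * v)"
proof -
  have "convex_on {0..} (\<lambda>x. - a x)" using cc by (simp add: concave_on_def)
  from convex_onD[OF this t, of 0 v] v
  have "- a ((1 - t) *\<^sub>R 0 + t *\<^sub>R v) \<le> (1 - t) * - a 0 + t * - a v" by simp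
  then show ?thesis using a0 by simp
qed

lemma a_subadd:
  fixes a :: "real \<Rightarrow> real" assumes cc: "concave_on {0..} a" and a0: "a 0 = (0::real)" and xy: "0 \<le> x" "0 \<le> y"
  shows "a (x + y) \<le> a x + a y"
proof (cases "x + y = 0")
  case True have "x = 0" using xy True by linarith
  moreover have "y = 0" using xy True by linarith
  ultimately
  show ?thesis using a0 by simp
next
  case False
  then have s: "0 < x + y" using xy by simp
  have "x/(x+y) * a (x+y) \<le> a (x/(x+y) * (x+y))"
    using xy s by (intro concave_scale[OF cc a0]) auto
  moreover have "y/(x+y) * a (x+y) \<le> a (y/(x+y) * (x+y))"
    using xy s by (intro concave_scale[OF cc a0]) auto
  ultimately have "x/(x+y) * a (x+y) + y/(x+y) * a (x+y) \<le> a x + a y" using s by simp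
  moreover have "x/(x+y) * a (x+y) + y/(x+y) * a (x+y) = a (x+y)"
    using s by (simp add: add_divide_distrib[symmetric] distrib_right[symmetric])
  ultimately show ?thesis by simp
qed

lemma a_diff:
  fixes a :: "real \<Rightarrow> real" assumes cc: "concave_on {0..} a" and a0: "a 0 = (0::real)" and mono: "strict_mono a"
    and xy: "0 \<le> x" "0 \<le> y"
  shows "\<bar>a x - a y\<bar> \<le> a \<bar>x - y\<bar>"
proof (cases "y \<le> x")
  case True
  have "a x = a (y + (x - y))" by simp
  also have "\<dots> \<le> a y + a (x - y)" using True xy by (intro a_subadd[OF cc a0]) auto
  finally have "a x - a y \<le> a \<bar>x - y\<bar>" using True by simp
  moreover have "a y \<le> a x" using True mono by (simp add: strict_mono_less_eq)
  ultimately show ?thesis by simp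
next
  case False
  have "a y = a (x + (y - x))" by simp
  also have "\<dots> \<le> a x + a (y - x)" using False xy by (intro a_subadd[OF cc a0]) auto
  finally have "a y - a x \<le> a \<bar>x - y\<bar>" using False by simp
  moreover have "a x \<le> a y" using False mono by (simp add: strict_mono_less_eq)
  ultimately show ?thesis by simp
qed

lemma a_lin:
  fixes a :: "real \<Rightarrow> real" assumes L: "\<forall>x y. \<bar>a x - a y\<bar> \<le> L * \<bar>x - y\<bar>" and a0: "a 0 = (0::real)" and x: "0 \<le> x"
  shows "a x \<le> L * x"
  using L[rule_format, of x 0] a0 x by simp

lemma a_pow:
  fixes a :: "real \<Rightarrow> real" assumes L: "\<forall>x y. \<bar>a x - a y\<bar> \<le> L * \<bar>x - y\<bar>" and a0: "a 0 = (0::real)"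
    and mono: "strict_mono a" and tail: "\<forall>x\<ge>1. a x = c + x powr q" and q: "0 < q" "q \<le> 1"
    and x: "0 \<le> x"
  shows "a x \<le> (\<bar>L\<bar> + \<bar>c\<bar> + 1) * x powr q"
proof (cases "x \<le> 1")
  case True
  have "a x \<le> L * x" by (rule a_lin[OF L a0 x])
  also have "\<dots> \<le> \<bar>L\<bar> * x" using x by (simp add: mult_right_mono)
  also have "\<dots> \<le> \<bar>L\<bar> * x powr q"
  proof (cases "x = 0")
    case False
    then have "x powr 1 \<le> x powr q" using powr_mono'[of q 1 x] True x q by auto
    then show ?thesis using x False by (simp add: mult_left_mono)
  qed simp
  also have "\<dots> \<le> (\<bar>L\<bar> + \<bar>c\<bar> + 1) * x powr q" by (simp add: mult_right_mono)
  finally show ?thesis .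
next
  case False
  then have "a x = c + x powr q" using tail by simp
  moreover have "1 \<le> x powr q" using False q by (simp add: ge_one_powr_ge_zero)
  moreover have "\<bar>c\<bar> * 1 \<le> \<bar>c\<bar> * x powr q" using \<open>1 \<le> x powr q\<close> by (intro mult_left_mono) auto
  ultimately have "a x \<le> (\<bar>c\<bar> + 1) * x powr q" unfolding distrib_right by linarith
  also have "\<dots> \<le> (\<bar>L\<bar> + \<bar>c\<bar> + 1) * x powr q" by (simp add: mult_right_mono)
  finally show ?thesis .
qed


lemma empirical_P1:
  assumes N: "1 \<le> N" shows "empirical N x \<in> P1_meas"
proof -
  let ?U = "uniform_measure (count_space UNIV) {1..N}"
  have e: "emeasure (count_space UNIV) {1..N} = of_nat N" using N by simp
  have ps: "prob_space ?U" by (rule prob_space_uniform_measure) (use N e in auto)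
  have "prob_space (empirical N x)" unfolding empirical_def
    by (rule prob_space.prob_space_distr[OF ps]) simp
  moreover have "integrable (empirical N x) (\<lambda>y. y)"
  proof -
    have "(\<integral>\<^sup>+ i. ennreal (norm (x i)) \<partial>?U) < \<infinity>"
      using N by (simp add: nn_integral_uniform_measure nn_integral_indicator_finite ennreal_of_nat_eq_real_of_nat divide_ennreal sum_nonneg)
    then have "integrable ?U x" by (simp add: integrable_iff_bounded)
    then show ?thesis unfolding empirical_def by (subst integrable_distr_eq) auto
  qed
  ultimately show ?thesis by (simp add: P1_meas_def empirical_def)
qed

lemma Wa_self:
  assumes "\<mu> \<in> P1_meas" shows "Wa a \<mu> \<mu> = 0"
proof -
  have sm: "sets \<mu> = sets borel" using assms by (simp add: P1_meas_def)
  let ?p = "distr \<mu> borel (\<lambda>y. (y, y))"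
  have meas: "(\<lambda>y::real. (y, y)) \<in> \<mu> \<rightarrow>\<^sub>M borel"
    using sm by (simp add: measurable_def[symmetric] measurable_cong_sets[OF sm refl])
  have "?p \<in> couplings_of \<mu> \<mu>"
  proof -
    have i: "distr \<mu> borel (\<lambda>x. x) = \<mu>" using sm by (intro distr_id2) simp
    have "distr ?p borel fst = distr \<mu> borel (fst \<circ> (\<lambda>y. (y, y)))"
      by (rule distr_distr[OF _ meas]) (simp_all add: borel_measurable_continuous_onI continuous_on_fst continuous_on_snd)
    then have "distr ?p borel fst = \<mu>" using i by (simp add: comp_def)
    moreover have "distr ?p borel snd = distr \<mu> borel (snd \<circ> (\<lambda>y. (y, y)))"
      by (rule distr_distr[OF _ meas]) (simp_all add: borel_measurable_continuous_onI continuous_on_fst continuous_on_snd)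
    then have "distr ?p borel snd = \<mu>" using i by (simp add: comp_def)
    ultimately show ?thesis by (simp add: couplings_of_def)
  qed
  moreover have "(\<integral>\<^sup>+ yy. ennreal \<bar>a (fst yy) - a (snd yy)\<bar> \<partial>?p) = 0"
  proof -
    have cl: "closed {yy::real\<times>real. fst yy = snd yy}"
      by (intro closed_Collect_eq continuous_intros)
    have "AE yy in ?p. fst yy = snd yy"
      by (subst AE_distr_iff[OF meas]) (use cl in \<open>auto intro: borel_closed\<close>)
    then have "AE yy in ?p. ennreal \<bar>a (fst yy) - a (snd yy)\<bar> = 0" by (rule AE_mp) auto
    then have "(\<integral>\<^sup>+ yy. ennreal \<bar>a (fst yy) - a (snd yy)\<bar> \<partial>?p) = (\<integral>\<^sup>+ yy. 0 \<partial>?p)"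
      by (rule nn_integral_cong_AE)
    then show ?thesis by simp
  qed
  ultimately have "Wa a \<mu> \<mu> \<le> 0" unfolding Wa_def by (intro INF_lower2[of ?p]) auto
  then show ?thesis by simp
qed

lemma b_lower:
  fixes b :: "real \<Rightarrow> real measure \<Rightarrow> real"
  assumes b_0: "\<forall>\<mu>\<in>P1_meas. b 0 \<mu> \<ge> 0"
    and b_lip: "\<forall>x\<ge>0. \<forall>x'\<ge>0. \<forall>\<mu>\<in>P1_meas. \<forall>\<mu>'\<in>P1_meas.
                 ennreal \<bar>b x \<mu> - b x' \<mu>'\<bar> \<le> ennreal C * (ennreal \<bar>a x - a x'\<bar> + Wa a \<mu> \<mu>')"
    and a0: "a 0 = 0"
    and x: "0 \<le> x" and mu: "\<mu> \<in> P1_meas"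
  shows "- (max C 0 * \<bar>a x\<bar>) \<le> b x \<mu>"
proof -
  have "ennreal \<bar>b x \<mu> - b 0 \<mu>\<bar> \<le> ennreal C * ennreal \<bar>a x\<bar>"
    using b_lip[rule_format, of x 0 \<mu> \<mu>] x mu a0 Wa_self[OF mu] by simp
  also have "\<dots> \<le> ennreal (max C 0 * \<bar>a x\<bar>)"
    by (cases "C \<le> 0") (auto simp: ennreal_mult[symmetric] ennreal_neg max_def)
  finally have "\<bar>b x \<mu> - b 0 \<mu>\<bar> \<le> max C 0 * \<bar>a x\<bar>"
    by (subst (asm) ennreal_le_iff) auto
  then show ?thesis using b_0 mu by auto
qed


lemma poisson_sums_1: "(\<lambda>k. exp (- m) * m ^ k / fact k) sums (1::real)"
proof -
  have "(\<lambda>k. exp (- m) * (m ^ k /\<^sub>R fact k)) sums (exp (- m) * exp m)"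
    by (rule sums_mult[OF exp_converges])
  then show ?thesis by (simp add: exp_minus field_simps)
qed

lemma poisson_sums_mean: "(\<lambda>k. real k * (exp (- m) * m ^ k / fact k)) sums (m::real)"
proof -
  have "(\<lambda>n. (m * exp (- m)) * (m ^ n /\<^sub>R fact n)) sums ((m * exp (- m)) * exp m)"
    by (rule sums_mult[OF exp_converges])
  then have "(\<lambda>n. (\<lambda>k. real k * (exp (- m) * m ^ k / fact k)) (Suc n)) sums m"
    by (simp add: exp_minus field_simps del: of_nat_Suc)
  then show ?thesis by (subst (asm) sums_Suc_iff) simp
qed

lemma prm_props:
  assumes M: "prob_space M" and P: "poisson_random_measure M L P"
    and A: "A \<in> sets L" and fin: "emeasure L A < \<infinity>"
  shows "(AE \<omega> in M. \<exists>k::nat. emeasure (P \<omega>) A = of_nat k)"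
    and "(\<integral>\<^sup>+ \<omega>. emeasure (P \<omega>) A \<partial>M) = emeasure L A"
proof -
  interpret prob_space M by (rule M)
  define m where "m = enn2real (emeasure L A)"
  have m0: "0 \<le> m" by (simp add: m_def)
  have LA: "emeasure L A = ennreal m" using fin by (simp add: m_def less_top[symmetric])
  define Y where "Y \<omega> = emeasure (P \<omega>) A" for \<omega>
  have Ym: "Y \<in> borel_measurable M" unfolding Y_def using P A by (simp add: poisson_random_measure_def)
  define E where "E k = {\<omega>\<in>space M. Y \<omega> = of_nat k}" for k :: nat
  have Es: "E k \<in> sets M" for k unfolding E_def using Ym by measurable
  have pE: "measure M (E k) = exp (- m) * m ^ k / fact k" for k
    using P A fin unfolding poisson_random_measure_def E_def Y_def m_def by auto
  have eE: "emeasure M (E k) = ennreal (exp (- m) * m ^ k / fact k)" for k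
    using pE by (simp add: emeasure_eq_measure)
  have dE: "disjoint_family E" unfolding disjoint_family_on_def E_def by auto
  have "emeasure M (\<Union>k. E k) = (\<Sum>k. emeasure M (E k))"
    using Es dE by (intro suminf_emeasure[symmetric]) auto
  also have "\<dots> = ennreal 1" unfolding eE by (intro suminf_ennreal_eq poisson_sums_1) (use m0 in auto)
  finally have U1: "emeasure M (\<Union>k. E k) = 1" by simp
  have Us: "(\<Union>k. E k) \<in> sets M" using Es by auto
  have "emeasure M (space M - (\<Union>k. E k)) = 0"
    using U1 Us by (simp add: emeasure_eq_measure prob_compl)
  then have AEU: "AE \<omega> in M. \<omega> \<in> (\<Union>k. E k)"
    by (subst AE_iff_measurable[of "space M - (\<Union>k. E k)"]) (use Us in auto)
  then show "AE \<omega> in M. \<exists>k::nat. emeasure (P \<omega>) A = of_nat k"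
    by (rule AE_mp) (auto simp: E_def Y_def)
  have "AE \<omega> in M. Y \<omega> = (\<Sum>k. of_nat k * indicator (E k) \<omega>)"
    using AEU
  proof (rule AE_mp, intro AE_I2 impI)
    fix \<omega> assume "\<omega> \<in> (\<Union>k. E k)"
    then obtain k where k: "\<omega> \<in> E k" by auto
    have "(\<Sum>j. (of_nat j :: ennreal) * indicator (E j) \<omega>) = (\<Sum>j. if j = k then of_nat k else 0)"
      using k dE by (intro suminf_cong) (auto simp: disjoint_family_on_def indicator_def)
    also have "\<dots> = of_nat k" using sums_single[of k "\<lambda>_. (of_nat k :: ennreal)"] sums_unique by fastforce
    finally show "Y \<omega> = (\<Sum>j. of_nat j * indicator (E j) \<omega>)" using k by (simp add: E_def)
  qed
  then have "(\<integral>\<^sup>+ \<omega>. Y \<omega> \<partial>M) = (\<integral>\<^sup>+ \<omega>. (\<Sum>k. of_nat k * indicator (E k) \<omega>) \<partial>M)"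
    by (rule nn_integral_cong_AE)
  also have "\<dots> = (\<Sum>k. \<integral>\<^sup>+ \<omega>. of_nat k * indicator (E k) \<omega> \<partial>M)"
    using Es by (intro nn_integral_suminf) auto
  also have "\<dots> = (\<Sum>k. ennreal (real k * (exp (- m) * m ^ k / fact k)))"
    using Es by (intro suminf_cong) (simp add: nn_integral_cmult_indicator eE ennreal_of_nat_eq_real_of_nat flip: ennreal_mult')
  also have "\<dots> = ennreal m" using m0 by (intro suminf_ennreal_eq poisson_sums_mean) auto
  finally show "(\<integral>\<^sup>+ \<omega>. emeasure (P \<omega>) A \<partial>M) = emeasure L A" using LA by (simp add: Y_def)
qed


lemma intensity_box:
  assumes nu: "prob_space \<nu>" "sets \<nu> = sets (borel :: real measure)"
    and st: "0 \<le> s" and F: "0 \<le> F" and U: "U \<in> sets borel"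
  shows "emeasure (intensity \<nu>) ({s<..t} \<times> {0..F} \<times> U) = emeasure lborel {s<..t} * ennreal F * emeasure \<nu> U"
proof -
  have sf\<nu>: "sigma_finite_measure \<nu>" using nu(1) by (rule prob_space_imp_sigma_finite)
  have sf2: "sigma_finite_measure (lborel \<Otimes>\<^sub>M \<nu>)"
    by (intro sigma_finite_pair_measure sf\<nu>) (simp add: lborel.sigma_finite_measure_axioms)
  have Us: "U \<in> sets \<nu>" using U nu by simp
  have S: "({0..} \<times> {0..} \<times> UNIV :: (real \<times> real \<times> real) set) \<in> sets (lborel \<Otimes>\<^sub>M (lborel \<Otimes>\<^sub>M \<nu>))"
    by (intro pair_measureI) (auto intro: borel_closed simp: nu(2))
  have B: "{s<..t} \<times> {0..F} \<times> U \<in> sets (lborel \<Otimes>\<^sub>M (lborel \<Otimes>\<^sub>M \<nu>))"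
    using Us by (intro pair_measureI) (auto intro: borel_closed)
  have int: "({0..} \<times> {0..} \<times> UNIV) \<inter> ({s<..t} \<times> {0..F} \<times> U) = {s<..t} \<times> {0..F} \<times> U"
    using st by auto
  have "emeasure (intensity \<nu>) ({s<..t} \<times> {0..F} \<times> U)
      = emeasure (lborel \<Otimes>\<^sub>M (lborel \<Otimes>\<^sub>M \<nu>)) ({s<..t} \<times> {0..F} \<times> U)"
    unfolding intensity_def using S B by (simp add: emeasure_restricted int)
  also have "\<dots> = emeasure lborel {s<..t} * emeasure (lborel \<Otimes>\<^sub>M \<nu>) ({0..F} \<times> U)"
    using Us by (intro sigma_finite_measure.emeasure_pair_measure_Times[OF sf2]) auto
  also have "emeasure (lborel \<Otimes>\<^sub>M \<nu>) ({0..F} \<times> U) = emeasure lborel {0..F} * emeasure \<nu> U"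
    using Us by (intro sigma_finite_measure.emeasure_pair_measure_Times[OF sf\<nu>]) auto
  finally show ?thesis using F by (simp add: mult.assoc)
qed

lemma nu_tail:
  assumes nu: "prob_space \<nu>" "sets \<nu> = sets (borel :: real measure)" "emeasure \<nu> {..<0} = 0"
       "\<forall>l\<ge>0. (\<integral>y. exp (- l * y) \<partial>\<nu>) = exp (- (l powr \<alpha>))"
    and x: "0 < x"
  shows "emeasure \<nu> {x<..} \<le> ennreal (x powr (- \<alpha>) / (1 - exp (- 1)))"
proof -
  interpret prob_space \<nu> by (rule nu(1))
  define l where "l = 1 / x"
  have l0: "0 < l" using x by (simp add: l_def)
  have e1: "0 < 1 - exp (- 1::real)" by simp
  have meas: "(\<lambda>y. exp (- l * y)) \<in> borel_measurable \<nu>"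
    using nu(2) by (simp add: measurable_cong_sets[OF nu(2) refl])
  have ind: "{x<..} \<in> sets \<nu>" using nu(2) by simp
  have ii: "integrable \<nu> (indicator {x<..} :: real \<Rightarrow> real)"
    by (rule integrable_real_indicator[OF ind]) (simp add: less_top[symmetric])
  have AE0: "AE y in \<nu>. 0 \<le> y"
  proof -
    have "{..<0} \<in> sets \<nu>" using nu(2) by simp
    moreover have "space \<nu> = UNIV" using sets_eq_imp_space_eq[OF nu(2)] by simp
    ultimately show ?thesis using nu(3) by (subst AE_iff_measurable[of "{..<0}"]) auto
  qed
  have "(\<integral>y. exp (- l * y) \<partial>\<nu>) \<le> (\<integral>y. 1 - (1 - exp (- 1::real)) * indicator {x<..} y \<partial>\<nu>)"
  proof (rule integral_mono_AE)
    show "integrable \<nu> (\<lambda>y. exp (- l * y))"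
      using AE0 meas
      by (intro integrable_const_bound[where B=1]) (auto elim!: AE_mp simp: l0 less_imp_le)
    show "integrable \<nu> (\<lambda>y. 1 - (1 - exp (- 1::real)) * indicator {x<..} y)"
    proof -
      have "integrable \<nu> (indicator {x<..} :: real \<Rightarrow> real)"
        by (rule integrable_real_indicator[OF ind]) (simp add: less_top[symmetric])
      then show ?thesis by simp
    qed
    show "AE y in \<nu>. exp (- l * y) \<le> 1 - (1 - exp (- 1::real)) * indicator {x<..} y"
      using AE0
    proof (rule AE_mp, intro AE_I2 impI)
      fix y :: real assume y: "0 \<le> y"
      show "exp (- l * y) \<le> 1 - (1 - exp (- 1::real)) * indicator {x<..} y"
      proof (cases "x < y")
        case True
        then have "1 < l * y" using x by (simp add: l_def field_simps)
        then have "exp (- l * y) \<le> exp (- 1)" by simp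
        then show ?thesis using True by simp
      next
        case False
        then show ?thesis using y l0 by simp
      qed
    qed
  qed
  also have "\<dots> = 1 - (1 - exp (- 1)) * measure \<nu> {x<..}"
    using ind ii by (subst Bochner_Integration.integral_diff) (auto simp: prob_space)
  finally have "exp (- (l powr \<alpha>)) \<le> 1 - (1 - exp (- 1)) * measure \<nu> {x<..}"
    using nu(4) l0 by simp
  moreover have "1 - exp (- (l powr \<alpha>)) \<le> l powr \<alpha>"
    using exp_ge_add_one_self[of "- (l powr \<alpha>)"] by simp
  ultimately have "(1 - exp (- 1)) * measure \<nu> {x<..} \<le> l powr \<alpha>" by simp
  then have "measure \<nu> {x<..} \<le> l powr \<alpha> / (1 - exp (- 1))"
    using e1 by (simp add: field_simps)
  moreover have "l powr \<alpha> = x powr (- \<alpha>)" using x by (simp add: l_def powr_minus_divide powr_divide)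
  ultimately show ?thesis by (simp add: emeasure_eq_measure ennreal_leI)
qed


lemma right_seq_tendsto:
  fixes x :: real assumes c: "continuous (at_right x) g" and xn: "\<And>n. x \<le> y n" and lim: "y \<longlonglongrightarrow> x"
  shows "(\<lambda>n. g (y n)) \<longlonglongrightarrow> (g x :: real)"
proof (rule tendstoI)
  fix e :: real assume e: "0 < e"
  have "(g \<longlongrightarrow> g x) (at_right x)" using c by (simp add: continuous_within)
  then have "eventually (\<lambda>z. dist (g z) (g x) < e) (at_right x)" using e by (rule tendstoD)
  then obtain b where b: "x < b" "\<And>z. x < z \<Longrightarrow> z < b \<Longrightarrow> dist (g z) (g x) < e"
    by (auto simp: eventually_at_right_field)
  define d where "d = b - x"
  have d: "0 < d" "\<And>z. x < z \<Longrightarrow> z < x + d \<Longrightarrow> dist (g z) (g x) < e" using b by (auto simp: d_def)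
  have "eventually (\<lambda>n. dist (y n) x < d) sequentially" using lim d(1) by (rule tendstoD)
  then show "eventually (\<lambda>n. dist (g (y n)) (g x) < e) sequentially"
  proof (rule eventually_mono)
    fix n assume "dist (y n) x < d"
    then have "y n < x + d" by (simp add: dist_real_def abs_less_iff)
    then show "dist (g (y n)) (g x) < e"
      using xn[of n] d(2)[of "y n"] e by (cases "x = y n") auto
  qed
qed

lemma cadlag_meas0:
  assumes "cadlag g" shows "(\<lambda>s. g (max s 0)) \<in> borel_measurable borel"
proof (rule borel_measurable_LIMSEQ_real)
  let ?u = "\<lambda>n s. g (real_of_int \<lceil>real (Suc n) * max s 0\<rceil> / real (Suc n))"
  show "\<And>n. ?u n \<in> borel_measurable borel"
  proof -
    fix n
    have "(\<lambda>s. (\<lambda>k s. g (real_of_int k / real (Suc n))) (\<lceil>real (Suc n) * max s 0\<rceil>) s) \<in> borel_measurable borel"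
      by (rule measurable_compose_countable) measurable
    then show "?u n \<in> borel_measurable borel" by simp
  qed
  fix s :: real
  define x where "x = max s 0"
  have c: "continuous (at_right x) g" using assms by (simp add: cadlag_def x_def)
  have lo: "x \<le> real_of_int \<lceil>real (Suc n) * x\<rceil> / real (Suc n)" for n
  proof -
    have "real (Suc n) * x \<le> real_of_int \<lceil>real (Suc n) * x\<rceil>" by (rule le_of_int_ceiling)
    then show ?thesis by (subst pos_le_divide_eq) (simp_all add: mult.commute)
  qed
  have up: "real_of_int \<lceil>real (Suc n) * x\<rceil> / real (Suc n) \<le> x + 1 / real (Suc n)" for n
  proof -
    have "real_of_int \<lceil>real (Suc n) * x\<rceil> \<le> real (Suc n) * x + 1"
      using ceiling_correct[of "real (Suc n) * x"] by linarith
    then have "real_of_int \<lceil>real (Suc n) * x\<rceil> / real (Suc n) \<le> (real (Suc n) * x + 1) / real (Suc n)"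
      by (intro divide_right_mono) auto
    also have "\<dots> = x + 1 / real (Suc n)" by (simp add: field_simps)
    finally show ?thesis .
  qed
  have "(\<lambda>n. x + 1 / real (Suc n)) \<longlonglongrightarrow> x + 0"
    by (intro tendsto_intros LIMSEQ_inverse_real_of_nat[simplified inverse_eq_divide])
  then have h: "(\<lambda>n. x + 1 / real (Suc n)) \<longlonglongrightarrow> x" by simp
  have e1: "eventually (\<lambda>n. x \<le> real_of_int \<lceil>real (Suc n) * x\<rceil> / real (Suc n)) sequentially"
    using lo by (intro always_eventually) auto
  have e2: "eventually (\<lambda>n. real_of_int \<lceil>real (Suc n) * x\<rceil> / real (Suc n) \<le> x + 1 / real (Suc n)) sequentially"
    using up by (intro always_eventually) auto
  have t: "(\<lambda>n. real_of_int \<lceil>real (Suc n) * x\<rceil> / real (Suc n)) \<longlonglongrightarrow> x"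
    by (rule real_tendsto_sandwich[OF e1 e2 tendsto_const h])
  show "(\<lambda>n. ?u n s) \<longlonglongrightarrow> g (max s 0)"
    using right_seq_tendsto[OF c lo t] by (simp add: x_def)
qed

lemma leftlim_meas:
  assumes cg: "cadlag g" shows "(\<lambda>s. leftlim g s) \<in> borel_measurable borel"
proof (rule borel_measurable_LIMSEQ_real)
  let ?w = "\<lambda>n s. if s \<le> 0 then g 0 else g (max (s - 1 / real (Suc n)) 0)"
  have m0: "(\<lambda>s. g (max s 0)) \<in> borel_measurable borel" by (rule cadlag_meas0[OF cg])
  show "\<And>n. ?w n \<in> borel_measurable borel"
  proof -
    fix n
    have "(\<lambda>s. g (max (s - 1 / real (Suc n)) 0)) \<in> borel_measurable borel"
      using measurable_compose[OF _ m0, of "\<lambda>s. s - 1 / real (Suc n)" borel] by simp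
    then show "?w n \<in> borel_measurable borel" by measurable
  qed
  fix s :: real
  show "(\<lambda>n. ?w n s) \<longlonglongrightarrow> leftlim g s"
  proof (cases "s \<le> 0")
    case True then show ?thesis by (simp add: leftlim_def)
  next
    case False
    then have s: "0 < s" by simp
    obtain l where l: "(g \<longlongrightarrow> l) (at_left s)" using cg s by (auto simp: cadlag_def)
    have ll: "leftlim g s = l" using s l by (simp add: leftlim_def tendsto_Lim)
    have seq: "(\<lambda>n. s - 1 / real (Suc n)) \<longlonglongrightarrow> s - 0"
      by (intro tendsto_intros LIMSEQ_inverse_real_of_nat[simplified inverse_eq_divide])
    have "filterlim (\<lambda>n. s - 1 / real (Suc n)) (at_left s) sequentially"
      unfolding filterlim_at using seq by auto
    then have "(\<lambda>n. g (s - 1 / real (Suc n))) \<longlonglongrightarrow> l" using l by (rule filterlim_compose[rotated])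
    moreover have "eventually (\<lambda>n. g (s - 1 / real (Suc n)) = ?w n s) sequentially"
    proof -
      obtain N :: nat where N: "1 / s < real N" using reals_Archimedean2 by blast
      show ?thesis
      proof (rule eventually_sequentiallyI[of N])
        fix n assume "N \<le> n"
        then have "1 / s < real (Suc n)" using N by simp
        then have "1 / real (Suc n) < s" using s by (simp add: field_simps)
        then show "g (s - 1 / real (Suc n)) = ?w n s" using s by simp
      qed
    qed
    ultimately show ?thesis unfolding ll by (rule Lim_transform_eventually)
  qed
qed


lemma ownJ_incr:
  fixes Q :: "(real \<times> real \<times> real) measure"
  assumes sQ: "sets Q = sets (borel \<Otimes>\<^sub>M (borel \<Otimes>\<^sub>M borel))"
    and lm: "(\<lambda>s. leftlim g s) \<in> borel_measurable borel"
    and fm: "f \<in> borel_measurable borel" and pm: "\<psi> \<in> borel_measurable borel"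
    and F: "\<forall>x. f x \<le> F" and P: "\<forall>x. \<psi> x \<le> P" and p0: "\<forall>x. 0 \<le> \<psi> x"
    and st: "0 \<le> s" "s \<le> t"
  shows "ownJ \<psi> f g t Q \<le> ownJ \<psi> f g s Q + ennreal P * emeasure Q ({s<..t} \<times> {0..F} \<times> {0..})"
proof -
  have [measurable]: "(\<lambda>s. \<psi> (leftlim g s)) \<in> borel_measurable borel" by (rule measurable_compose[OF lm pm])
  have [measurable]: "(\<lambda>s. f (leftlim g s)) \<in> borel_measurable borel" by (rule measurable_compose[OF lm fm])
  define I where "I r x = indicator ({0..r} \<times> {0..} \<times> {0..}) x * ennreal (\<psi> (leftlim g (fst x)))
      * indicator {x. fst (snd x) \<le> f (leftlim g (fst x))} x" for r and x :: "real \<times> real \<times> real"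
  define J where "J x = indicator ({s<..t} \<times> {0..} \<times> {0..}) x * ennreal (\<psi> (leftlim g (fst x)))
      * indicator {x. fst (snd x) \<le> f (leftlim g (fst x))} x" for x :: "real \<times> real \<times> real"
  have own: "ownJ \<psi> f g r Q = (\<integral>\<^sup>+ x. I r x \<partial>Q)" for r
    unfolding ownJ_def I_def by (intro nn_integral_cong) (auto simp: indicator_def split: prod.split)
  have mI: "I s \<in> borel_measurable Q"
    unfolding measurable_cong_sets[OF sQ refl] I_def by measurable
  have mJ: "J \<in> borel_measurable Q"
    unfolding measurable_cong_sets[OF sQ refl] J_def by measurable
  have B: "{s<..t} \<times> {0..F} \<times> {0..} \<in> sets Q" unfolding sQ by measurable
  have "ownJ \<psi> f g t Q = (\<integral>\<^sup>+ x. I s x + J x \<partial>Q)"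
    unfolding own
  proof (rule nn_integral_cong)
    fix x :: "real \<times> real \<times> real"
    obtain a b c where x: "x = (a, b, c)" by (cases x) auto
    show "I t x = I s x + J x" using st unfolding x I_def J_def by (auto simp: indicator_def)
  qed
  also have "\<dots> = ownJ \<psi> f g s Q + (\<integral>\<^sup>+ x. J x \<partial>Q)"
    unfolding own by (rule nn_integral_add[OF mI mJ])
  also have "(\<integral>\<^sup>+ x. J x \<partial>Q) \<le> (\<integral>\<^sup>+ x. ennreal P * indicator ({s<..t} \<times> {0..F} \<times> {0..}) x \<partial>Q)"
  proof (rule nn_integral_mono)
    fix x :: "real \<times> real \<times> real"
    obtain a b c where x: "x = (a, b, c)" by (cases x) auto
    show "J x \<le> ennreal P * indicator ({s<..t} \<times> {0..F} \<times> {0..}) x"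
      unfolding x J_def using F P p0 by (auto simp: indicator_def ennreal_leI intro: order_trans)
  qed
  also have "\<dots> = ennreal P * emeasure Q ({s<..t} \<times> {0..F} \<times> {0..})"
    using B by (rule nn_integral_cmult_indicator)
  finally show ?thesis by (simp add: add_left_mono)
qed

lemma crossJ_incr:
  fixes Q :: "(real \<times> real \<times> real) measure"
  assumes sQ: "sets Q = sets (borel \<Otimes>\<^sub>M (borel \<Otimes>\<^sub>M borel))"
    and lm: "(\<lambda>s. leftlim g s) \<in> borel_measurable borel"
    and fm: "f \<in> borel_measurable borel"
    and F: "\<forall>x. f x \<le> F"
    and st: "0 \<le> s" "s \<le> t"
  shows "crossJ f g t Q \<le> crossJ f g s Q + (\<integral>\<^sup>+ x. ennreal (snd (snd x)) * indicator ({s<..t} \<times> {0..F} \<times> {0..}) x \<partial>Q)"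
proof -
  have [measurable]: "(\<lambda>s. f (leftlim g s)) \<in> borel_measurable borel" by (rule measurable_compose[OF lm fm])
  define I where "I r x = indicator ({0..r} \<times> {0..} \<times> {0..}) x * ennreal (snd (snd x))
      * indicator {x. fst (snd x) \<le> f (leftlim g (fst x))} x" for r and x :: "real \<times> real \<times> real"
  define J where "J x = indicator ({s<..t} \<times> {0..} \<times> {0..}) x * ennreal (snd (snd x))
      * indicator {x. fst (snd x) \<le> f (leftlim g (fst x))} x" for x :: "real \<times> real \<times> real"
  have cr: "crossJ f g r Q = (\<integral>\<^sup>+ x. I r x \<partial>Q)" for r
    unfolding crossJ_def I_def by (intro nn_integral_cong) (auto simp: indicator_def split: prod.split)
  have mI: "I s \<in> borel_measurable Q"
    unfolding measurable_cong_sets[OF sQ refl] I_def by measurable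
  have mJ: "J \<in> borel_measurable Q"
    unfolding measurable_cong_sets[OF sQ refl] J_def by measurable
  have "crossJ f g t Q = (\<integral>\<^sup>+ x. I s x + J x \<partial>Q)"
    unfolding cr
  proof (rule nn_integral_cong)
    fix x :: "real \<times> real \<times> real"
    obtain a b c where x: "x = (a, b, c)" by (cases x) auto
    show "I t x = I s x + J x" using st unfolding x I_def J_def by (auto simp: indicator_def)
  qed
  also have "\<dots> = crossJ f g s Q + (\<integral>\<^sup>+ x. J x \<partial>Q)"
    unfolding cr by (rule nn_integral_add[OF mI mJ])
  also have "(\<integral>\<^sup>+ x. J x \<partial>Q) \<le> (\<integral>\<^sup>+ x. ennreal (snd (snd x)) * indicator ({s<..t} \<times> {0..F} \<times> {0..}) x \<partial>Q)"
  proof (rule nn_integral_mono)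
    fix x :: "real \<times> real \<times> real"
    obtain a b c where x: "x = (a, b, c)" by (cases x) auto
    show "J x \<le> ennreal (snd (snd x)) * indicator ({s<..t} \<times> {0..F} \<times> {0..}) x"
      unfolding x J_def using F by (auto simp: indicator_def intro: order_trans)
  qed
  finally show ?thesis by (simp add: add_left_mono)
qed

lemma ownJ_mono:
  assumes "s \<le> t" shows "ownJ \<psi> f g s Q \<le> ownJ \<psi> f g t Q"
  unfolding ownJ_def using assms
  by (intro nn_integral_mono) (auto simp: indicator_def split: prod.split)

lemma crossJ_mono:
  assumes "s \<le> t" shows "crossJ f g s Q \<le> crossJ f g t Q"
  unfolding crossJ_def using assms
  by (intro nn_integral_mono) (auto simp: indicator_def split: prod.split)


lemma first_switch:
  assumes "P n" "\<not> P 0" shows "\<exists>k. \<not> P k \<and> P (Suc k)"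
  using assms
proof (induction n)
  case 0 then show ?case by simp
next
  case (Suc n) then show ?case by (cases "P n") auto
qed

lemma term_le_suminf: "(f k :: ennreal) \<le> (\<Sum>i. f i)"
  using sum_le_suminf[of f "{k}"] by auto

lemma shell_pointwise:
  fixes R c :: real
  assumes R: "0 < R" and c: "0 \<le> c"
  shows "ennreal c \<le> (\<Sum>k. ennreal (R / 2 ^ k) * indicator {R / 2 ^ Suc k<..R / 2 ^ k} c)
                  + (\<Sum>k. ennreal (2 ^ Suc k * R) * indicator {2 ^ k * R<..2 ^ Suc k * R} c)"
proof (cases "c = 0")
  case True then show ?thesis by simp
next
  case False
  then have c0: "0 < c" using c by simp
  show ?thesis
  proof (cases "c \<le> R")
    case True
    obtain n where n: "R / c < 2 ^ n" using real_arch_pow[of 2 "R / c"] by auto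
    have "R / 2 ^ n < c" using n c0 by (simp add: field_simps)
    then obtain k where k: "\<not> R / 2 ^ k < c" "R / 2 ^ Suc k < c"
      using first_switch[of "\<lambda>n. R / 2 ^ n < c" n] True by auto
    have "ennreal c \<le> ennreal (R / 2 ^ k) * indicator {R / 2 ^ Suc k<..R / 2 ^ k} c"
      using k by (auto simp: indicator_def ennreal_leI)
    also have "\<dots> \<le> (\<Sum>k. ennreal (R / 2 ^ k) * indicator {R / 2 ^ Suc k<..R / 2 ^ k} c)"
      by (rule term_le_suminf)
    finally show ?thesis by (rule order_trans) simp
  next
    case False
    obtain n where n: "c / R < 2 ^ n" using real_arch_pow[of 2 "c / R"] by auto
    have "c \<le> 2 ^ n * R" using n R by (simp add: field_simps)
    then obtain k where k: "\<not> c \<le> 2 ^ k * R" "c \<le> 2 ^ Suc k * R"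
      using first_switch[of "\<lambda>n. c \<le> 2 ^ n * R" n] False by auto
    have "ennreal c \<le> ennreal (2 ^ Suc k * R) * indicator {2 ^ k * R<..2 ^ Suc k * R} c"
      using k by (auto simp: indicator_def ennreal_leI)
    also have "\<dots> \<le> (\<Sum>k. ennreal (2 ^ Suc k * R) * indicator {2 ^ k * R<..2 ^ Suc k * R} c)"
      by (rule term_le_suminf)
    finally show ?thesis by (rule order_trans) simp
  qed
qed

lemma shell_integral:
  fixes Q :: "(real \<times> real \<times> real) measure"
  assumes sQ: "sets Q = sets (borel \<Otimes>\<^sub>M (borel \<Otimes>\<^sub>M borel))"
    and R: "0 < R"
  shows "(\<integral>\<^sup>+ x. ennreal (snd (snd x)) * indicator ({s<..t} \<times> {0..F} \<times> {0..}) x \<partial>Q)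
     \<le> (\<Sum>k. ennreal (R / 2 ^ k) * emeasure Q ({s<..t} \<times> {0..F} \<times> {R / 2 ^ Suc k<..R / 2 ^ k}))
      + (\<Sum>k. ennreal (2 ^ Suc k * R) * emeasure Q ({s<..t} \<times> {0..F} \<times> {2 ^ k * R<..2 ^ Suc k * R}))"
proof -
  define A where "A k = {s<..t} \<times> {0..F} \<times> {R / 2 ^ Suc k<..R / 2 ^ k}" for k :: nat
  define B where "B k = {s<..t} \<times> {0..F} \<times> {2 ^ k * R<..2 ^ Suc k * R}" for k :: nat
  have As: "A k \<in> sets Q" for k unfolding sQ A_def by measurable
  have Bs: "B k \<in> sets Q" for k unfolding sQ B_def by measurable
  have "(\<integral>\<^sup>+ x. ennreal (snd (snd x)) * indicator ({s<..t} \<times> {0..F} \<times> {0..}) x \<partial>Q)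
      \<le> (\<integral>\<^sup>+ x. (\<Sum>k. ennreal (R / 2 ^ k) * indicator (A k) x) + (\<Sum>k. ennreal (2 ^ Suc k * R) * indicator (B k) x) \<partial>Q)"
  proof (rule nn_integral_mono)
    fix x :: "real \<times> real \<times> real"
    obtain a b c where x: "x = (a, b, c)" by (cases x) auto
    show "ennreal (snd (snd x)) * indicator ({s<..t} \<times> {0..F} \<times> {0..}) x
        \<le> (\<Sum>k. ennreal (R / 2 ^ k) * indicator (A k) x) + (\<Sum>k. ennreal (2 ^ Suc k * R) * indicator (B k) x)"
    proof (cases "a \<in> {s<..t} \<and> b \<in> {0..F} \<and> 0 \<le> c")
      case True
      have "indicator (A k) x = (indicator {R / 2 ^ Suc k<..R / 2 ^ k} c :: ennreal)" for k
        using True unfolding x A_def by (simp add: indicator_def)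
      moreover have "indicator (B k) x = (indicator {2 ^ k * R<..2 ^ Suc k * R} c :: ennreal)" for k
        using True unfolding x B_def by (simp add: indicator_def)
      ultimately show ?thesis using shell_pointwise[OF R, of c] True unfolding x by (simp add: indicator_def)
    next
      case False
      then show ?thesis unfolding x by (auto simp: indicator_def)
    qed
  qed
  also have "\<dots> = (\<integral>\<^sup>+ x. (\<Sum>k. ennreal (R / 2 ^ k) * indicator (A k) x) \<partial>Q) + (\<integral>\<^sup>+ x. (\<Sum>k. ennreal (2 ^ Suc k * R) * indicator (B k) x) \<partial>Q)"
    using As Bs by (intro nn_integral_add) auto
  also have "\<dots> = (\<Sum>k. ennreal (R / 2 ^ k) * emeasure Q (A k)) + (\<Sum>k. ennreal (2 ^ Suc k * R) * emeasure Q (B k))"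
    using As Bs by (simp add: nn_integral_suminf nn_integral_cmult_indicator)
  finally show ?thesis unfolding A_def B_def .
qed


lemma path_positive:
  fixes g \<beta> J :: "real \<Rightarrow> real" and x0 K :: real
  assumes cg: "cadlag g" and x0: "0 < x0" and K: "0 \<le> K"
    and eq: "\<forall>t\<ge>0. g t = x0 + (LINT s:{0..t}|lborel. \<beta> s) + J t"
    and int: "\<forall>t\<ge>0. set_integrable lborel {0..t} \<beta>"
    and Jmono: "\<forall>s t. 0 \<le> s \<longrightarrow> s \<le> t \<longrightarrow> J s \<le> J t"
    and J0: "0 \<le> J 0"
    and lower: "\<forall>s\<ge>0. 0 < g s \<longrightarrow> - (K * g s) \<le> \<beta> s"
  shows "\<forall>t\<ge>0. 0 < g t"
proof (rule ccontr)
  assume "\<not> (\<forall>t\<ge>0. 0 < g t)"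
  then obtain t0 where t0: "0 \<le> t0" "g t0 \<le> 0" by force
  define S where "S = {t. 0 \<le> t \<and> g t \<le> 0}"
  define \<tau> where "\<tau> = Inf S"
  have Sne: "S \<noteq> {}" using t0 by (auto simp: S_def)
  have bdd: "bdd_below S" by (auto simp: S_def bdd_below_def)
  have tau0: "0 \<le> \<tau>" unfolding \<tau>_def using Sne by (intro cInf_greatest) (auto simp: S_def)
  have before: "0 < g r" if "0 \<le> r" "r < \<tau>" for r
  proof (rule ccontr)
    assume "\<not> 0 < g r"
    then have "r \<in> S" using that by (auto simp: S_def)
    then have "\<tau> \<le> r" unfolding \<tau>_def using bdd by (rule cInf_lower)
    then show False using that by simp
  qed
  have g0: "0 < g 0"
  proof -
    have "(LINT s:{0..0}|lborel. \<beta> s) = 0"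
    proof -
      have "AE s in lborel. indicator {0..0::real} s *\<^sub>R \<beta> s = 0"
        using AE_lborel_singleton[of 0] by (rule AE_mp) (intro AE_I2, auto simp: indicator_def)
      then show ?thesis unfolding set_lebesgue_integral_def by (rule integral_eq_zero_AE)
    qed
    then show ?thesis using eq J0 x0 by force
  qed
  have gtau: "g \<tau> \<le> 0"
  proof (rule ccontr)
    assume "\<not> g \<tau> \<le> 0"
    then have pos: "0 < g \<tau>" by simp
    have "(g \<longlongrightarrow> g \<tau>) (at_right \<tau>)" using cg tau0 by (simp add: cadlag_def continuous_within)
    then have "eventually (\<lambda>y. 0 < g y) (at_right \<tau>)" using pos by (rule order_tendstoD)
    then obtain b where b: "\<tau> < b" "\<And>y. \<tau> < y \<Longrightarrow> y < b \<Longrightarrow> 0 < g y"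
      by (auto simp: eventually_at_right_field)
    have "b \<le> \<tau>" unfolding \<tau>_def using Sne
    proof (intro cInf_greatest)
      fix x assume "x \<in> S"
      then have x: "0 \<le> x" "g x \<le> 0" by (auto simp: S_def)
      show "b \<le> x"
      proof (rule ccontr)
        assume "\<not> b \<le> x"
        then have "x < b" by simp
        moreover have "\<not> x < \<tau>" using before x by force
        ultimately show False using b(2)[of x] pos x by (cases "x = \<tau>") auto
      qed
    qed
    then show False using b by simp
  qed
  have taupos: "0 < \<tau>" using tau0 gtau g0 by (cases "\<tau> = 0") auto
  obtain l where l: "(g \<longlongrightarrow> l) (at_left \<tau>)" using cg taupos by (auto simp: cadlag_def)
  then have "eventually (\<lambda>y. g y < l + 1) (at_left \<tau>)" by (rule order_tendstoD) simp
  then obtain c where c: "c < \<tau>" "\<And>y. c < y \<Longrightarrow> y < \<tau> \<Longrightarrow> g y < l + 1"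
    by (auto simp: eventually_at_left_field)
  define r0 where "r0 = max (max c 0) (\<tau> - 1 / (2 * (K + 1)))"
  have r0: "0 \<le> r0" "r0 < \<tau>" "c \<le> r0" "K * (\<tau> - r0) \<le> 1 / 2"
  proof -
    show "0 \<le> r0" "c \<le> r0" by (auto simp: r0_def)
    show "r0 < \<tau>" using c taupos K by (auto simp: r0_def)
    have "\<tau> - r0 \<le> 1 / (2 * (K + 1))" by (auto simp: r0_def)
    then have "K * (\<tau> - r0) \<le> K * (1 / (2 * (K + 1)))" using K by (rule mult_left_mono)
    also have "\<dots> \<le> 1 / 2" using K by (simp add: field_simps)
    finally show "K * (\<tau> - r0) \<le> 1 / 2" .
  qed
  define Mx where "Mx = Sup (g ` {r0..<\<tau>})"
  have bddM: "bdd_above (g ` {r0..<\<tau>})"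
  proof -
    have "g y \<le> max (l + 1) (g r0)" if "y \<in> {r0..<\<tau>}" for y
      using that c(2)[of y] r0 by (cases "y = r0") auto
    then show ?thesis unfolding bdd_above_def by (intro exI[of _ "max (l + 1) (g r0)"]) auto
  qed
  have neM: "g ` {r0..<\<tau>} \<noteq> {}" using r0 by auto
  have gM: "g y \<le> Mx" if "y \<in> {r0..<\<tau>}" for y
    unfolding Mx_def using bddM that by (intro cSup_upper) auto
  have Mpos: "0 < Mx" using gM[of r0] before[of r0] r0 by auto
  have key: "g r \<le> Mx / 2" if r: "r \<in> {r0..<\<tau>}" for r
  proof -
    have r0r: "0 \<le> r" "r < \<tau>" using r r0 by auto
    have i\<tau>: "set_integrable lborel {0..\<tau>} \<beta>" using int tau0 by simp
    have i1: "set_integrable lborel {0..r} \<beta>" using int r0r by simp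
    have i2: "set_integrable lborel {r<..\<tau>} \<beta>"
      by (rule set_integrable_subset[OF i\<tau>]) (use r0r in auto)
    have split: "(LINT s:{0..\<tau>}|lborel. \<beta> s) = (LINT s:{0..r}|lborel. \<beta> s) + (LINT s:{r<..\<tau>}|lborel. \<beta> s)"
    proof -
      have "{0..\<tau>} = {0..r} \<union> {r<..\<tau>}" using r0r by auto
      moreover have "{0..r} \<inter> {r<..\<tau>} = {}" by auto
      ultimately show ?thesis using set_integral_Un[OF _ i1 i2] by simp
    qed
    have ic: "set_integrable lborel {r<..\<tau>} (\<lambda>s. - (K * Mx))"
    proof -
      have "integrable lborel (indicator {r<..\<tau>} :: real \<Rightarrow> real)"
        by (rule integrable_real_indicator) (use r0r in auto)
      then show ?thesis by (simp add: set_integrable_def)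
    qed
    have "(LINT s:{r<..\<tau>}|lborel. - (K * Mx)) \<le> (LINT s:{r<..\<tau>}|lborel. \<beta> s)"
    proof (rule set_integral_mono_AE[OF ic i2])
      show "AE s\<in>{r<..\<tau>} in lborel. - (K * Mx) \<le> \<beta> s"
        using AE_lborel_singleton[of \<tau>]
      proof (rule AE_mp, intro AE_I2 impI)
        fix s assume "s \<noteq> \<tau>" "s \<in> {r<..\<tau>}"
        then have s: "r0 \<le> s" "s < \<tau>" "0 \<le> s" using r0r r by auto
        have gs: "0 < g s" using before s by simp
        have "- (K * Mx) \<le> - (K * g s)" using gM[of s] s K by (simp add: mult_left_mono)
        also have "\<dots> \<le> \<beta> s" using lower s gs by simp
        finally show "- (K * Mx) \<le> \<beta> s" .
      qed
    qed
    moreover have "(LINT s:{r<..\<tau>}|lborel. - (K * Mx)) = - (K * Mx) * (\<tau> - r)"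
      using r0r by (simp add: set_integral_const)
    ultimately have "- (K * Mx) * (\<tau> - r) \<le> (LINT s:{r<..\<tau>}|lborel. \<beta> s)" by simp
    moreover have "g \<tau> - g r = (LINT s:{r<..\<tau>}|lborel. \<beta> s) + (J \<tau> - J r)"
      using eq tau0 r0r split by simp
    moreover have "J r \<le> J \<tau>" using Jmono r0r by simp
    ultimately have "g r \<le> g \<tau> + K * Mx * (\<tau> - r)" by simp
    also have "\<dots> \<le> K * Mx * (\<tau> - r)" using gtau by simp
    also have "\<dots> \<le> K * Mx * (\<tau> - r0)" using r Mpos K by (intro mult_left_mono) auto
    also have "\<dots> = Mx * (K * (\<tau> - r0))" by simp
    also have "\<dots> \<le> Mx * (1 / 2)" using r0(4) Mpos by (intro mult_left_mono) auto
    finally show ?thesis by simp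
  qed
  have "Mx \<le> Mx / 2" unfolding Mx_def using neM key by (intro cSup_least) (auto simp: Mx_def)
  then show False using Mpos by simp
qed


lemma t1:
  fixes R \<alpha> :: real assumes "0 < R"
  shows "R / 2 ^ k * (R / 2 ^ Suc k) powr (- \<alpha>) = R powr (1 - \<alpha>) * 2 powr \<alpha> * (2 powr (\<alpha> - 1)) ^ k"
proof -
  have e: "(2::real) ^ k = 2 powr real k" for k by (simp add: powr_realpow)
  show ?thesis using assms
    by (simp add: e powr_divide powr_powr powr_diff powr_add powr_minus powr_mult field_simps flip: powr_realpow)
qed
lemma t2:
  fixes R \<alpha> q :: real assumes "0 < R"
  shows "(2 ^ Suc k * R) powr q * (2 ^ k * R) powr (- \<alpha>) = 2 powr q * R powr (q - \<alpha>) * (2 powr (q - \<alpha>)) ^ k"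
proof -
  have e: "(2::real) ^ k = 2 powr real k" for k by (simp add: powr_realpow)
  show ?thesis using assms
    by (simp add: e powr_divide powr_powr powr_diff powr_add powr_minus powr_mult field_simps flip: powr_realpow)
qed
lemma t3:
  fixes N d \<alpha> :: real assumes "0 < N" "0 < d" "0 < \<alpha>"
  shows "N powr (- 1 / \<alpha>) * N * d * ((N * d) powr (1 / \<alpha>)) powr (1 - \<alpha>) = d powr (1 / \<alpha>)"
  using assms by (simp add: powr_powr powr_mult powr_minus powr_add[symmetric] powr_diff field_simps)
lemma t4:
  fixes N d \<alpha> q :: real assumes "0 < N" "0 < d" "0 < \<alpha>"
  shows "N powr (- q / \<alpha>) * N * d * ((N * d) powr (1 / \<alpha>)) powr (q - \<alpha>) = d powr (q / \<alpha>)"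
  using assms by (simp add: powr_powr powr_mult powr_minus powr_add[symmetric] powr_diff field_simps)
lemma small_series:
  fixes R \<alpha> c0 :: real assumes R: "0 < R" and a: "0 < \<alpha>" "\<alpha> < 1" and c0: "0 \<le> c0"
  shows "(\<Sum>k. ennreal (R / 2 ^ k) * ennreal (c0 * (R / 2 ^ Suc k) powr (- \<alpha>)))
       = ennreal (c0 * (R powr (1 - \<alpha>) * 2 powr \<alpha>) / (1 - 2 powr (\<alpha> - 1)))"
proof -
  have r: "\<bar>2 powr (\<alpha> - 1)\<bar> < (1::real)" using a by (simp add: powr_less_one)
  have "(\<lambda>k. (c0 * (R powr (1 - \<alpha>) * 2 powr \<alpha>)) * (2 powr (\<alpha> - 1)) ^ k) sums
        ((c0 * (R powr (1 - \<alpha>) * 2 powr \<alpha>)) * (1 / (1 - 2 powr (\<alpha> - 1))))"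
    by (intro sums_mult geometric_sums) (use r in simp)
  then have s: "(\<lambda>k. R / 2 ^ k * (c0 * (R / 2 ^ Suc k) powr (- \<alpha>))) sums
        (c0 * (R powr (1 - \<alpha>) * 2 powr \<alpha>) / (1 - 2 powr (\<alpha> - 1)))"
    using t1[OF R, of _ \<alpha>] by (simp add: mult.commute mult.left_commute)
  have "(\<Sum>k. ennreal (R / 2 ^ k) * ennreal (c0 * (R / 2 ^ Suc k) powr (- \<alpha>)))
     = (\<Sum>k. ennreal (R / 2 ^ k * (c0 * (R / 2 ^ Suc k) powr (- \<alpha>))))"
    using R by (intro suminf_cong ennreal_mult'[symmetric]) simp
  also have "\<dots> = ennreal (c0 * (R powr (1 - \<alpha>) * 2 powr \<alpha>) / (1 - 2 powr (\<alpha> - 1)))"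
    using R c0 by (intro suminf_ennreal_eq s) simp
  finally show ?thesis .
qed

lemma big_series:
  fixes R \<alpha> q c0 :: real assumes R: "0 < R" and q: "q < \<alpha>" and c0: "0 \<le> c0"
  shows "(\<Sum>k. ennreal ((2 ^ Suc k * R) powr q) * ennreal (c0 * (2 ^ k * R) powr (- \<alpha>)))
       = ennreal (c0 * (2 powr q * R powr (q - \<alpha>)) / (1 - 2 powr (q - \<alpha>)))"
proof -
  have r: "\<bar>2 powr (q - \<alpha>)\<bar> < (1::real)" using q by (simp add: powr_less_one)
  have "(\<lambda>k. (c0 * (2 powr q * R powr (q - \<alpha>))) * (2 powr (q - \<alpha>)) ^ k) sums
        ((c0 * (2 powr q * R powr (q - \<alpha>))) * (1 / (1 - 2 powr (q - \<alpha>))))"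
    by (intro sums_mult geometric_sums) (use r in simp)
  note that_s = this
  have s: "(\<lambda>k. (2 ^ Suc k * R) powr q * (c0 * (2 ^ k * R) powr (- \<alpha>))) sums
        (c0 * (2 powr q * R powr (q - \<alpha>)) / (1 - 2 powr (q - \<alpha>)))"
  proof -
    have eqk: "(2 ^ Suc k * R) powr q * (c0 * (2 ^ k * R) powr (- \<alpha>)) = (c0 * (2 powr q * R powr (q - \<alpha>))) * (2 powr (q - \<alpha>)) ^ k" for k
    proof -
      have "(2 ^ Suc k * R) powr q * (c0 * (2 ^ k * R) powr (- \<alpha>)) = c0 * ((2 ^ Suc k * R) powr q * (2 ^ k * R) powr (- \<alpha>))"
        by (simp only: ac_simps)
      also have "\<dots> = c0 * (2 powr q * R powr (q - \<alpha>) * (2 powr (q - \<alpha>)) ^ k)" by (simp only: t2[OF R])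
      also have "\<dots> = (c0 * (2 powr q * R powr (q - \<alpha>))) * (2 powr (q - \<alpha>)) ^ k" by (simp only: ac_simps)
      finally show ?thesis .
    qed
    show ?thesis unfolding eqk using that_s by simp
  qed
  have "(\<Sum>k. ennreal ((2 ^ Suc k * R) powr q) * ennreal (c0 * (2 ^ k * R) powr (- \<alpha>)))
     = (\<Sum>k. ennreal ((2 ^ Suc k * R) powr q * (c0 * (2 ^ k * R) powr (- \<alpha>))))"
    by (intro suminf_cong ennreal_mult'[symmetric]) simp
  also have "\<dots> = ennreal (c0 * (2 powr q * R powr (q - \<alpha>)) / (1 - 2 powr (q - \<alpha>)))"
    using R c0 by (intro suminf_ennreal_eq s) simp
  finally show ?thesis .
qed



lemma lip_meas:
  fixes f :: "real \<Rightarrow> real"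
  assumes L: "\<forall>x y. \<bar>f x - f y\<bar> \<le> L * \<bar>x - y\<bar>"
  shows "f \<in> borel_measurable borel"
proof -
  have "\<bar>L\<bar>-lipschitz_on UNIV f"
  proof (rule lipschitz_onI)
    fix x y :: real
    have "L * \<bar>x - y\<bar> \<le> \<bar>L\<bar> * \<bar>x - y\<bar>" by (intro mult_right_mono) auto
    then show "dist (f x) (f y) \<le> \<bar>L\<bar> * dist x y" using L by (simp add: dist_real_def) (metis order_trans)
  qed simp
  then have "continuous_on UNIV f" by (rule lipschitz_on_continuous_on)
  then show ?thesis by (rule borel_measurable_continuous_onI)
qed

lemma enn_diff:
  fixes x y z :: ennreal
  assumes "x \<le> y + z" "y \<le> x" "x < \<top>"
  shows "0 \<le> enn2real x - enn2real y" "ennreal (enn2real x - enn2real y) \<le> z"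
proof -
  have yt: "y < \<top>" using assms by (simp add: le_less_trans)
  obtain u where u: "x = ennreal u" "0 \<le> u" using assms(3) by (cases x) auto
  obtain v where v: "y = ennreal v" "0 \<le> v" using yt by (cases y) auto
  have vu: "v \<le> u" using assms(2) u v by simp
  show "0 \<le> enn2real x - enn2real y" using u v vu by simp
  show "ennreal (enn2real x - enn2real y) \<le> z"
  proof (cases "z = \<top>")
    case True then show ?thesis by simp
  next
    case False
    then obtain w where w: "z = ennreal w" "0 \<le> w" by (cases z) auto
    have "ennreal u \<le> ennreal (v + w)" using assms(1) u v w by (simp add: ennreal_plus)
    then have "u \<le> v + w" using w v by (subst (asm) ennreal_le_iff) auto
    then show ?thesis using u v w by (simp add: ennreal_leI)
  qed
qed

lemma nn_integral_combo:
  fixes M :: "'a measure" and f g h :: "'a \<Rightarrow> ennreal"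
  assumes [measurable]: "f \<in> borel_measurable M" "g \<in> borel_measurable M" "h \<in> borel_measurable M"
  shows "(\<integral>\<^sup>+ x. a * (b + c * (d * f x) + e * (k + m * (n * g x) + p * h x)) \<partial>M)
     = a * (b * emeasure M (space M) + c * (d * (\<integral>\<^sup>+ x. f x \<partial>M)) + e * (k * emeasure M (space M) + m * (n * (\<integral>\<^sup>+ x. g x \<partial>M)) + p * (\<integral>\<^sup>+ x. h x \<partial>M)))"
  apply (subst nn_integral_cmult, measurable)
  apply (subst nn_integral_add, measurable)+
  apply (subst nn_integral_cmult, measurable)+
  apply (subst nn_integral_add, measurable)+
  apply (subst nn_integral_cmult, measurable)+
  done

theorem mainTheorem10:
  fixes \<alpha> q c fl :: real
    and \<nu> \<nu>0 :: "real measure"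
    and a f \<psi> h :: "real \<Rightarrow> real"
    and b :: "real \<Rightarrow> real measure \<Rightarrow> real"
    and M :: "'w measure"
    and \<pi> :: "nat \<Rightarrow> 'w \<Rightarrow> (real \<times> real \<times> real) measure"
    and X0 :: "nat \<Rightarrow> 'w \<Rightarrow> real"
    and X :: "nat \<Rightarrow> nat \<Rightarrow> real \<Rightarrow> 'w \<Rightarrow> real"
  assumes alpha: "0 < \<alpha>" "\<alpha> < 1"
    and nu: "prob_space \<nu>" "sets \<nu> = sets (borel :: real measure)" "emeasure \<nu> {..<0} = 0"
       "\<forall>l\<ge>0. (\<integral>y. exp (- l * y) \<partial>\<nu>) = exp (- (l powr \<alpha>))"
    and q: "0 < q" "q < \<alpha>"
    and a_C2: "\<exists>a1 a2. (\<forall>x. (a has_real_derivative a1 x) (at x) \<and> (a1 has_real_derivative a2 x) (at x))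
                 \<and> continuous_on UNIV a2 \<and> (\<exists>K. \<forall>x. \<bar>a2 x\<bar> \<le> K * \<bar>a1 x\<bar>)"
    and a_odd: "\<forall>x. a (- x) = - a x" and a0: "a 0 = 0"
    and a_concave: "concave_on {0..} a"
    and a_lip: "\<exists>L. \<forall>x y. \<bar>a x - a y\<bar> \<le> L * \<bar>x - y\<bar>"
    and a_mono: "strict_mono a"
    and a_tail: "\<forall>x\<ge>1. a x = c + x powr q"
    and b_bdd: "\<exists>B. \<forall>x\<ge>0. \<forall>\<mu>\<in>P1_meas. \<bar>b x \<mu>\<bar> \<le> B"
    and b_0: "\<forall>\<mu>\<in>P1_meas. b 0 \<mu> \<ge> 0"
    and b_lip: "\<exists>C. \<forall>x\<ge>0. \<forall>x'\<ge>0. \<forall>\<mu>\<in>P1_meas. \<forall>\<mu>'\<in>P1_meas.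
                 ennreal \<bar>b x \<mu> - b x' \<mu>'\<bar> \<le> ennreal C * (ennreal \<bar>a x - a x'\<bar> + Wa a \<mu> \<mu>')"
    and f_bdd: "bounded (range f)" and f_lip: "\<exists>L. \<forall>x y. \<bar>f x - f y\<bar> \<le> L * \<bar>x - y\<bar>"
    and f_low: "0 < fl" "\<forall>x. fl \<le> f x"
    and psi_bdd: "bounded (range \<psi>)" and psi_nonneg: "\<forall>x. 0 \<le> \<psi> x"
    and psi_lip: "\<exists>L. \<forall>x y. \<bar>\<psi> x - \<psi> y\<bar> \<le> L * \<bar>x - y\<bar>"
    and f_psi_a: "\<exists>C. \<forall>x\<ge>0. \<forall>y\<ge>0. \<bar>f x - f y\<bar> + \<bar>\<psi> x - \<psi> y\<bar> \<le> C * \<bar>a x - a y\<bar>"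
    and nu0: "prob_space \<nu>0" "sets \<nu>0 = sets (borel :: real measure)" "emeasure \<nu>0 {..<0} = 0"
       "integrable \<nu>0 (\<lambda>x. \<bar>x\<bar> powr max (2 * \<alpha>) 1)" "emeasure \<nu>0 {0} = 0"
    and M: "prob_space M"
    and prm: "\<forall>i\<ge>1. poisson_random_measure M (intensity \<nu>) (\<pi> i)"
    and X0: "\<forall>i\<ge>1. X0 i \<in> borel_measurable M \<and> distr M borel (X0 i) = \<nu>0"
    and indep: "prob_space.indep_sets M
        (\<lambda>k. case k of Inl i \<Rightarrow> prm_sigma M (intensity \<nu>) (\<pi> i)
                      | Inr i \<Rightarrow> {X0 i -` B \<inter> space M | B. B \<in> sets (borel :: real measure)})
        (Inl ` {1..} \<union> Inr ` {1..})"
    and sol: "\<forall>N\<ge>1. particle_solution M b f \<psi> \<alpha> \<pi> X0 N (X N)"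
    and h_lip: "\<exists>Ch. \<forall>x y. \<bar>h x - h y\<bar> \<le> Ch * \<bar>a x - a y\<bar>"
  shows "\<exists>C. \<forall>N\<ge>1. \<forall>i\<in>{1..N}. \<forall>s\<ge>0. \<forall>t\<ge>0. \<bar>s - t\<bar> \<le> 1 \<longrightarrow>
           (\<integral>\<^sup>+ \<omega>. ennreal \<bar>h (X N i t \<omega>) - h (X N i s \<omega>)\<bar> \<partial>M) \<le> ennreal (C * \<bar>t - s\<bar> powr (q / \<alpha>))"
proof -
  interpret P: prob_space M by (rule M)
  obtain F0 where F0: "\<forall>x. norm (f x) \<le> F0" using f_bdd by (auto simp: bounded_iff)
  define F where "F = max F0 1"
  have F: "\<forall>x. f x \<le> F" "0 < F"
  proof -
    show "\<forall>x. f x \<le> F"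
    proof
      fix x have "\<bar>f x\<bar> \<le> F0" using F0 by simp
      then show "f x \<le> F" unfolding F_def le_max_iff_disj by (intro disjI1) linarith
    qed
    show "0 < F" by (simp add: F_def)
  qed
  obtain P00 where P00: "\<forall>x. norm (\<psi> x) \<le> P00" using psi_bdd by (auto simp: bounded_iff)
  define P0 where "P0 = max P00 0"
  have P0: "\<forall>x. \<psi> x \<le> P0" "0 \<le> P0"
  proof -
    show "\<forall>x. \<psi> x \<le> P0"
    proof
      fix x have "\<bar>\<psi> x\<bar> \<le> P00" using P00 by simp
      then show "\<psi> x \<le> P0" unfolding P0_def le_max_iff_disj by (intro disjI1) linarith
    qed
    show "0 \<le> P0" by (simp add: P0_def)
  qed
  obtain B0 where B0: "\<forall>x\<ge>0. \<forall>\<mu>\<in>P1_meas. \<bar>b x \<mu>\<bar> \<le> B0" using b_bdd by auto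
  define B where "B = max B0 0"
  have B: "\<forall>x\<ge>0. \<forall>\<mu>\<in>P1_meas. \<bar>b x \<mu>\<bar> \<le> B" "0 \<le> B"
    using B0 unfolding B_def le_max_iff_disj by auto
  obtain C0 where C0: "\<forall>x\<ge>0. \<forall>x'\<ge>0. \<forall>\<mu>\<in>P1_meas. \<forall>\<mu>'\<in>P1_meas.
                 ennreal \<bar>b x \<mu> - b x' \<mu>'\<bar> \<le> ennreal C0 * (ennreal \<bar>a x - a x'\<bar> + Wa a \<mu> \<mu>')"
    using b_lip by auto
  obtain L where L: "\<forall>x y. \<bar>a x - a y\<bar> \<le> L * \<bar>x - y\<bar>" using a_lip by auto
  define La where "La = \<bar>L\<bar>"
  have La: "\<forall>x y. \<bar>a x - a y\<bar> \<le> La * \<bar>x - y\<bar>" "0 \<le> La"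
  proof -
    show "\<forall>x y. \<bar>a x - a y\<bar> \<le> La * \<bar>x - y\<bar>"
    proof (intro allI)
      fix x y
      have "L * \<bar>x - y\<bar> \<le> \<bar>L\<bar> * \<bar>x - y\<bar>" by (intro mult_right_mono) auto
      then show "\<bar>a x - a y\<bar> \<le> La * \<bar>x - y\<bar>" using L unfolding La_def by (metis order_trans)
    qed
    show "0 \<le> La" by (simp add: La_def)
  qed
  obtain Ch where Ch: "\<forall>x y. \<bar>h x - h y\<bar> \<le> Ch * \<bar>a x - a y\<bar>" using h_lip by auto
  define Chp where "Chp = max Ch 0"
  have Chp: "\<forall>x y. \<bar>h x - h y\<bar> \<le> Chp * \<bar>a x - a y\<bar>" "0 \<le> Chp"
  proof -
    show "\<forall>x y. \<bar>h x - h y\<bar> \<le> Chp * \<bar>a x - a y\<bar>"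
    proof (intro allI)
      fix x y
      have "Ch * \<bar>a x - a y\<bar> \<le> Chp * \<bar>a x - a y\<bar>" unfolding Chp_def by (intro mult_right_mono) auto
      then show "\<bar>h x - h y\<bar> \<le> Chp * \<bar>a x - a y\<bar>" using Ch by (metis order_trans)
    qed
    show "0 \<le> Chp" by (simp add: Chp_def)
  qed
  define A where "A = \<bar>L\<bar> + \<bar>c\<bar> + 1"
  have A: "\<And>x. 0 \<le> x \<Longrightarrow> a x \<le> A * x powr q" "0 \<le> A"
    unfolding A_def using a_pow[OF L a0 a_mono a_tail q(1)] q alpha by auto
  define c1 where "c1 = 1 / (1 - exp (- 1::real))"
  have c1: "0 \<le> c1" by (simp add: c1_def)
  define K1 where "K1 = 2 powr \<alpha> / (1 - 2 powr (\<alpha> - 1))"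
  define K2 where "K2 = 2 powr q / (1 - 2 powr (q - \<alpha>))"
  have K1: "0 \<le> K1" using alpha by (simp add: K1_def powr_less_one less_imp_le)
  have K2: "0 \<le> K2" using q by (simp add: K2_def powr_less_one less_imp_le)
  define Cst where "Cst = Chp * (La * B + La * P0 * F + A * (1 + F * c1 * K1 + F * c1 * K2))"
  have core: "(\<integral>\<^sup>+ \<omega>. ennreal \<bar>h (X N i t \<omega>) - h (X N i s \<omega>)\<bar> \<partial>M) \<le> ennreal (Cst * (t - s) powr (q / \<alpha>))"
    if N: "1 \<le> N" and i: "i \<in> {1..N}" and s: "0 \<le> s" and st: "s < t" and t1: "t - s \<le> 1" for N i s t
  proof -
    define \<delta> where "\<delta> = t - s"
    have d0: "0 < \<delta>" "\<delta> \<le> 1" using st t1 by (auto simp: \<delta>_def)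
    have Npos: "0 < real N" using N by simp
    define R where "R = (real N * \<delta>) powr (1 / \<alpha>)"
    define \<epsilon> where "\<epsilon> = \<delta> powr (1 / \<alpha>)"
    have R0: "0 < R" using Npos d0 by (simp add: R_def)
    have e0: "0 < \<epsilon>" using d0 by (simp add: \<epsilon>_def)
    define box where "box U = {s<..t} \<times> {0..F} \<times> U" for U :: "real set"
    define cnt where "cnt \<omega> = emeasure (\<pi> i \<omega>) (box {0..})" for \<omega>
    define Sm where "Sm j k \<omega> = emeasure (\<pi> j \<omega>) (box {R / 2 ^ Suc k<..R / 2 ^ k})" for j k \<omega>
    define Bg where "Bg j k \<omega> = emeasure (\<pi> j \<omega>) (box {2 ^ k * R<..2 ^ Suc k * R})" for j k \<omega>
    define U where "U \<omega> = ennreal Chp * (ennreal (La * B * \<delta>) + ennreal La * (ennreal P0 * cnt \<omega>)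
         + ennreal A * (ennreal (\<epsilon> powr q) + ennreal (\<epsilon> powr (q - 1)) * (ennreal (real N powr (- 1 / \<alpha>)) * (\<Sum>j\<in>{1..N}. \<Sum>k. ennreal (R / 2 ^ k) * Sm j k \<omega>))
                        + ennreal (real N powr (- q / \<alpha>)) * (\<Sum>j\<in>{1..N}. \<Sum>k. ennreal ((2 ^ Suc k * R) powr q) * Bg j k \<omega>)))" for \<omega>
    have sI: "sets (intensity \<nu>) = sets (borel \<Otimes>\<^sub>M (borel \<Otimes>\<^sub>M borel))"
      unfolding intensity_def sets_density
      by (intro sets_pair_measure_cong) (simp_all add: sets_lborel nu(2) sets_pair_measure_cong)
    have boxS: "box V \<in> sets (intensity \<nu>)" if "V \<in> sets borel" for V
      unfolding sI box_def using that by measurable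
    have boxE: "emeasure (intensity \<nu>) (box V) = ennreal \<delta> * ennreal F * emeasure \<nu> V" if "V \<in> sets borel" for V
      unfolding box_def using intensity_box[OF nu(1,2) s _ that, of F t] F st
      by (simp add: \<delta>_def)
    have boxE': "emeasure (intensity \<nu>) (box V) \<le> ennreal (\<delta> * F) * emeasure \<nu> V" if "V \<in> sets borel" for V
      using boxE[OF that] d0 F by (simp add: ennreal_mult)
    have nuV: "emeasure \<nu> V \<le> 1" for V using nu(1) by (simp add: prob_space.emeasure_le_1)
    have Efin: "emeasure (intensity \<nu>) (box V) < \<infinity>" if "V \<in> sets borel" for V
    proof -
      have "emeasure (intensity \<nu>) (box V) \<le> ennreal (\<delta> * F) * 1"
        using order_trans[OF boxE'[OF that] mult_left_mono[OF nuV[of V]]] by simp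
      then show ?thesis by (simp add: le_less_trans)
    qed
    have prmj: "poisson_random_measure M (intensity \<nu>) (\<pi> j)" if "j \<in> {1..N}" for j
      using prm that by auto
    have Emeas: "(\<lambda>\<omega>. emeasure (\<pi> j \<omega>) (box V)) \<in> borel_measurable M" if "j \<in> {1..N}" "V \<in> sets borel" for j V
      using prmj[OF that(1)] boxS[OF that(2)] by (simp add: poisson_random_measure_def)
    have Eint: "(\<integral>\<^sup>+ \<omega>. emeasure (\<pi> j \<omega>) (box V) \<partial>M) = emeasure (intensity \<nu>) (box V)"
      if "j \<in> {1..N}" "V \<in> sets borel" for j V
      by (rule prm_props(2)[OF M prmj[OF that(1)] boxS[OF that(2)] Efin[OF that(2)]])
    have iN: "i \<in> {1..N}" by (rule i)
    have step1: "AE \<omega> in M. ennreal \<bar>h (X N i t \<omega>) - h (X N i s \<omega>)\<bar> \<le> U \<omega>"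
    proof -
      have solN: "particle_solution M b f \<psi> \<alpha> \<pi> X0 N (X N)" using sol N by simp
      note solAE = conjunct2[OF solN[unfolded particle_solution_def]]
      have X0pos: "AE \<omega> in M. 0 < X0 i \<omega>"
      proof -
        have X0m: "X0 i \<in> borel_measurable M" and X0d: "distr M borel (X0 i) = \<nu>0" using X0 iN by auto
        have Nset: "X0 i -` {..0} \<inter> space M \<in> sets M" using X0m by measurable
        have "emeasure M (X0 i -` {..0} \<inter> space M) = emeasure \<nu>0 {..0}"
          using emeasure_distr[OF X0m, of "{..0}"] X0d by simp
        also have "\<dots> \<le> emeasure \<nu>0 {..<0} + emeasure \<nu>0 {0}"
        proof -
          have e: "{..0::real} = {..<0} \<union> {0}" by auto
          have "emeasure \<nu>0 ({..<0} \<union> {0}) \<le> emeasure \<nu>0 {..<0} + emeasure \<nu>0 {0}"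
            using nu0(2) by (intro emeasure_subadditive) auto
          then show ?thesis unfolding e .
        qed
        also have "\<dots> = 0" using nu0(3,5) by simp
        finally have "emeasure M (X0 i -` {..0} \<inter> space M) = 0" by simp
        then show ?thesis using Nset by (subst AE_iff_measurable[of "X0 i -` {..0} \<inter> space M"]) auto
      qed
      have BgN: "AE \<omega> in M. \<forall>j\<in>{1..N}. \<forall>k. \<exists>n::nat. Bg j k \<omega> = of_nat n"
      proof (subst AE_ball_countable)
        show "countable {1..N}" by (simp add: countable_finite)
        show "\<forall>j\<in>{1..N}. AE \<omega> in M. \<forall>k. \<exists>n::nat. Bg j k \<omega> = of_nat n"
        proof
          fix j assume j: "j \<in> {1..N}"
          show "AE \<omega> in M. \<forall>k. \<exists>n::nat. Bg j k \<omega> = of_nat n"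
            unfolding AE_all_countable Bg_def
            by (intro allI prm_props(1)[OF M prmj[OF j] boxS Efin]) simp_all
        qed
      qed
      have sQ: "sets (\<pi> j \<omega>) = sets (borel \<Otimes>\<^sub>M (borel \<Otimes>\<^sub>M borel))" if "j \<in> {1..N}" "\<omega> \<in> space M" for j \<omega>
        using prmj[OF that(1)] that(2) sI by (simp add: poisson_random_measure_def)
      have fm: "f \<in> borel_measurable borel" using f_lip lip_meas by blast
      have pm: "\<psi> \<in> borel_measurable borel" using psi_lip lip_meas by blast
      have qle1: "q \<le> 1" using q alpha by simp
      have aLa: "a x \<le> La * x" if "0 \<le> x" for x using La(1)[rule_format, of x 0] a0 that by simp
      have anon: "0 \<le> a x" if "0 \<le> x" for x by (rule a_nonneg[OF a_mono a0 that])
      have amono: "a x \<le> a y" if "x \<le> y" for x y using a_mono that by (simp add: strict_mono_less_eq)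
      have asub: "a (x + y) \<le> a x + a y" if "0 \<le> x" "0 \<le> y" for x y by (rule a_subadd[OF a_concave a0 that])
      show ?thesis
        using AE_conjI[OF solAE AE_conjI[OF X0pos AE_conjI[OF BgN AE_space]]]
      proof (rule AE_mp, intro AE_I2 impI)
        fix \<omega> assume H: "(\<forall>i\<in>{1..N}. cadlag (\<lambda>t. X N i t \<omega>) \<and>
             (\<forall>t\<ge>0. set_integrable lborel {0..t} (\<lambda>s. b (X N i s \<omega>) (empirical N (\<lambda>j. X N j s \<omega>))) \<and>
                     ownJ \<psi> f (\<lambda>s. X N i s \<omega>) t (\<pi> i \<omega>) < \<infinity> \<and>
                     (\<forall>j\<in>{1..N}. crossJ f (\<lambda>s. X N j s \<omega>) t (\<pi> j \<omega>) < \<infinity>) \<and>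
                     X N i t \<omega> = X0 i \<omega> + (LINT s:{0..t}|lborel. b (X N i s \<omega>) (empirical N (\<lambda>j. X N j s \<omega>)))
                       + enn2real (ownJ \<psi> f (\<lambda>s. X N i s \<omega>) t (\<pi> i \<omega>))
                       + real N powr (- 1 / \<alpha>) * (\<Sum>j\<in>{1..N} - {i}. enn2real (crossJ f (\<lambda>s. X N j s \<omega>) t (\<pi> j \<omega>))))) \<and>
             0 < X0 i \<omega> \<and> (\<forall>j\<in>{1..N}. \<forall>k. \<exists>n::nat. Bg j k \<omega> = of_nat n) \<and> \<omega> \<in> space M"
        have cad: "cadlag (\<lambda>t. X N j t \<omega>)" if "j \<in> {1..N}" for j using H that by blast
        have HI: "\<forall>t\<ge>0. set_integrable lborel {0..t} (\<lambda>s. b (X N i s \<omega>) (empirical N (\<lambda>j. X N j s \<omega>))) \<and>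
                     ownJ \<psi> f (\<lambda>s. X N i s \<omega>) t (\<pi> i \<omega>) < \<infinity> \<and>
                     (\<forall>j\<in>{1..N}. crossJ f (\<lambda>s. X N j s \<omega>) t (\<pi> j \<omega>) < \<infinity>) \<and>
                     X N i t \<omega> = X0 i \<omega> + (LINT s:{0..t}|lborel. b (X N i s \<omega>) (empirical N (\<lambda>j. X N j s \<omega>)))
                       + enn2real (ownJ \<psi> f (\<lambda>s. X N i s \<omega>) t (\<pi> i \<omega>))
                       + real N powr (- 1 / \<alpha>) * (\<Sum>j\<in>{1..N} - {i}. enn2real (crossJ f (\<lambda>s. X N j s \<omega>) t (\<pi> j \<omega>)))"
          using H iN by blast
        have x0: "0 < X0 i \<omega>" and BgNat: "\<forall>j\<in>{1..N}. \<forall>k. \<exists>n::nat. Bg j k \<omega> = of_nat n" and \<omega>M: "\<omega> \<in> space M"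
          using H by auto
        define g where "g r = X N i r \<omega>" for r
        define \<beta> where "\<beta> r = b (X N i r \<omega>) (empirical N (\<lambda>j. X N j r \<omega>))" for r
        have gfun: "g = (\<lambda>s. X N i s \<omega>)" by (simp add: g_def fun_eq_iff)
        have \<beta>fun: "\<beta> = (\<lambda>s. b (X N i s \<omega>) (empirical N (\<lambda>j. X N j s \<omega>)))" by (simp add: \<beta>_def fun_eq_iff)
        define Ow where "Ow r = ownJ \<psi> f g r (\<pi> i \<omega>)" for r
        define Cr where "Cr j r = crossJ f (\<lambda>s. X N j s \<omega>) r (\<pi> j \<omega>)" for j r
        define J where "J r = enn2real (Ow r) + real N powr (- 1 / \<alpha>) * (\<Sum>j\<in>{1..N} - {i}. enn2real (Cr j r))" for r
        have emp: "empirical N (\<lambda>j. X N j r \<omega>) \<in> P1_meas" for r using empirical_P1 N by blast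
        have Owfin: "Ow r < \<top>" if "0 \<le> r" for r using HI that by (simp add: Ow_def gfun)
        have Crfin: "Cr j r < \<top>" if "0 \<le> r" "j \<in> {1..N}" for j r using HI that by (simp add: Cr_def)
        have geq: "g r = X0 i \<omega> + (LINT s:{0..r}|lborel. \<beta> s) + J r" if "0 \<le> r" for r
          using HI that by (simp add: g_def gfun \<beta>fun J_def Ow_def Cr_def add.assoc)
        have gint: "set_integrable lborel {0..r} \<beta>" if "0 \<le> r" for r using HI that by (simp add: \<beta>fun)
        have gpos: "\<forall>r\<ge>0. 0 < g r"
        proof (rule path_positive[where K = "max C0 0 * La"])
          show "cadlag g" using cad[OF iN] by (simp add: gfun)
          show "0 < X0 i \<omega>" by (rule x0)
          show "0 \<le> max C0 0 * La" using La by simp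
          show "\<forall>t\<ge>0. g t = X0 i \<omega> + (LINT s:{0..t}|lborel. \<beta> s) + J t" using geq by simp
          show "\<forall>t\<ge>0. set_integrable lborel {0..t} \<beta>" using gint by simp
          show "\<forall>s t. 0 \<le> s \<longrightarrow> s \<le> t \<longrightarrow> J s \<le> J t"
          proof (intro allI impI)
            fix r1 r2 :: real assume r: "0 \<le> r1" "r1 \<le> r2"
            have "enn2real (Ow r1) \<le> enn2real (Ow r2)"
              using r Owfin[of r2] by (intro enn2real_mono) (auto simp: Ow_def intro: ownJ_mono)
            moreover have "(\<Sum>j\<in>{1..N} - {i}. enn2real (Cr j r1)) \<le> (\<Sum>j\<in>{1..N} - {i}. enn2real (Cr j r2))"
              using r Crfin by (intro sum_mono enn2real_mono) (auto simp: Cr_def intro: crossJ_mono)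
            ultimately show "J r1 \<le> J r2" unfolding J_def by (intro add_mono mult_left_mono) auto
          qed
          show "0 \<le> J 0" unfolding J_def by (intro add_nonneg_nonneg mult_nonneg_nonneg sum_nonneg) auto
          show "\<forall>s\<ge>0. 0 < g s \<longrightarrow> - (max C0 0 * La * g s) \<le> \<beta> s"
          proof (intro allI impI)
            fix r :: real assume r: "0 \<le> r" "0 < g r"
            have "- (max C0 0 * \<bar>a (g r)\<bar>) \<le> \<beta> r"
              unfolding \<beta>_def g_def using r(2) by (intro b_lower[OF b_0 C0 a0]) (auto simp: g_def emp)
            moreover have "\<bar>a (g r)\<bar> \<le> La * g r" using aLa[of "g r"] anon[of "g r"] r by simp
            then have "max C0 0 * \<bar>a (g r)\<bar> \<le> max C0 0 * (La * g r)" by (intro mult_left_mono) auto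
            ultimately show "- (max C0 0 * La * g r) \<le> \<beta> r" by (simp add: mult.assoc)
          qed
        qed
        have gnn: "0 \<le> g r" if "0 \<le> r" for r using gpos that by (simp add: less_imp_le)
        have t0: "0 \<le> t" using s st by simp
        have stle: "s \<le> t" using st by simp
        define Dr where "Dr = (LINT r:{0..t}|lborel. \<beta> r) - (LINT r:{0..s}|lborel. \<beta> r)"
        have Dr: "\<bar>Dr\<bar> \<le> B * \<delta>"
        proof -
          have i1: "set_integrable lborel {0..s} \<beta>" by (rule gint[OF s])
          have i2: "set_integrable lborel {s<..t} \<beta>" by (rule set_integrable_subset[OF gint[OF t0]]) (use s in auto)
          have "(LINT r:{0..t}|lborel. \<beta> r) = (LINT r:{0..s}|lborel. \<beta> r) + (LINT r:{s<..t}|lborel. \<beta> r)"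
          proof -
            have e: "{0..t} = {0..s} \<union> {s<..t}" using s stle by auto
            have "{0..s} \<inter> {s<..t} = {}" by auto
            then show ?thesis unfolding e using set_integral_Un[OF _ i1 i2] by simp
          qed
          then have De: "Dr = (LINT r:{s<..t}|lborel. \<beta> r)" by (simp add: Dr_def)
          have bB: "\<bar>\<beta> r\<bar> \<le> B" if "r \<in> {s<..t}" for r
            unfolding \<beta>_def using B(1) gnn[of r] that s emp[of r] by (simp add: g_def)
          have bB2: "- B \<le> \<beta> r" "\<beta> r \<le> B" if "r \<in> {s<..t}" for r using bB[OF that] by auto
          have ind: "integrable lborel (indicator {s<..t} :: real \<Rightarrow> real)"
            by (rule integrable_real_indicator) (use stle in auto)
          have icB: "set_integrable lborel {s<..t} (\<lambda>_. B)" using ind by (simp add: set_integrable_def)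
          have icB': "set_integrable lborel {s<..t} (\<lambda>_. - B)" using ind by (simp add: set_integrable_def)
          have "(LINT r:{s<..t}|lborel. \<beta> r) \<le> (LINT r:{s<..t}|lborel. B)"
            by (rule set_integral_mono[OF i2 icB]) (rule bB2(2))
          moreover have "(LINT r:{s<..t}|lborel. - B) \<le> (LINT r:{s<..t}|lborel. \<beta> r)"
            by (rule set_integral_mono[OF icB' i2]) (rule bB2(1))
          moreover have "(LINT r:{s<..t}|lborel. B) = B * \<delta>" using stle by (simp add: set_integral_const \<delta>_def)
          moreover have "(LINT r:{s<..t}|lborel. - B) = - (B * \<delta>)" using stle by (simp add: set_integral_const \<delta>_def)
          ultimately show ?thesis unfolding De by simp
        qed
        have lmi: "(\<lambda>s. leftlim g s) \<in> borel_measurable borel" using leftlim_meas cad[OF iN] by (simp add: gfun)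
        have Owinc: "Ow t \<le> Ow s + ennreal P0 * cnt \<omega>"
          unfolding Ow_def cnt_def box_def
          by (rule ownJ_incr[OF sQ[OF iN \<omega>M] lmi fm pm F(1) P0(1) psi_nonneg s stle])
        define Od where "Od = enn2real (Ow t) - enn2real (Ow s)"
        have Owm: "Ow s \<le> Ow t" unfolding Ow_def using stle by (rule ownJ_mono)
        have Od: "0 \<le> Od" "ennreal Od \<le> ennreal P0 * cnt \<omega>"
          using enn_diff[OF Owinc Owm Owfin[OF t0]] by (auto simp: Od_def)
        define SmS where "SmS j = (\<Sum>k. ennreal (R / 2 ^ k) * Sm j k \<omega>)" for j
        define BgS where "BgS j = (\<Sum>k. ennreal (2 ^ Suc k * R) * Bg j k \<omega>)" for j
        define Cd where "Cd j = enn2real (Cr j t) - enn2real (Cr j s)" for j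
        have Cd: "0 \<le> Cd j \<and> ennreal (Cd j) \<le> SmS j + BgS j" if j: "j \<in> {1..N}" for j
        proof -
          have lmj: "(\<lambda>s. leftlim (\<lambda>s. X N j s \<omega>) s) \<in> borel_measurable borel" using leftlim_meas cad[OF j] by simp
          have "Cr j t \<le> Cr j s + (\<integral>\<^sup>+ x. ennreal (snd (snd x)) * indicator ({s<..t} \<times> {0..F} \<times> {0..}) x \<partial>\<pi> j \<omega>)"
            unfolding Cr_def by (rule crossJ_incr[OF sQ[OF j \<omega>M] lmj fm F(1) s stle])
          also have "\<dots> \<le> Cr j s + (SmS j + BgS j)"
            unfolding SmS_def BgS_def Sm_def Bg_def box_def
            by (intro add_left_mono shell_integral[OF sQ[OF j \<omega>M] R0])
          finally have inc: "Cr j t \<le> Cr j s + (SmS j + BgS j)" .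
          have Crm: "Cr j s \<le> Cr j t" unfolding Cr_def using stle by (rule crossJ_mono)
          show ?thesis using enn_diff[OF inc Crm Crfin[OF t0 j]] by (auto simp: Cd_def)
        qed
        define Z where "Z = real N powr (- 1 / \<alpha>) * (\<Sum>j\<in>{1..N} - {i}. Cd j)"
        have Z0: "0 \<le> Z" unfolding Z_def using Cd by (intro mult_nonneg_nonneg sum_nonneg) auto
        have Dfull: "g t - g s = Dr + Od + Z"
          using geq[OF t0] geq[OF s]
          unfolding J_def Dr_def Od_def Z_def Cd_def by (simp add: sum_subtractf algebra_simps)
        have absD: "\<bar>g t - g s\<bar> \<le> B * \<delta> + Od + Z" using Dfull Dr Od(1) Z0 by linarith
        have BD: "0 \<le> B * \<delta>" using B(2) d0 by simp
        have "a \<bar>g t - g s\<bar> \<le> a (B * \<delta> + Od + Z)" by (rule amono[OF absD])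
        also have "\<dots> \<le> a (B * \<delta> + Od) + a Z" using BD Od(1) Z0 by (intro asub) auto
        also have "\<dots> \<le> a (B * \<delta>) + a Od + a Z" using BD Od(1) asub by simp
        also have "\<dots> \<le> La * (B * \<delta>) + La * Od + A * Z powr q"
          using aLa[OF BD] aLa[OF Od(1)] A(1)[OF Z0] by simp
        finally have aD: "a \<bar>g t - g s\<bar> \<le> La * (B * \<delta>) + La * Od + A * Z powr q" .
        have hD: "\<bar>h (X N i t \<omega>) - h (X N i s \<omega>)\<bar> \<le> Chp * (La * (B * \<delta>) + La * Od + A * Z powr q)"
        proof -
          have "\<bar>h (g t) - h (g s)\<bar> \<le> Chp * \<bar>a (g t) - a (g s)\<bar>" using Chp(1) by simp
          also have "\<dots> \<le> Chp * a \<bar>g t - g s\<bar>"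
            using a_diff[OF a_concave a0 a_mono gnn[OF t0] gnn[OF s]] Chp(2) by (intro mult_left_mono) auto
          also have "\<dots> \<le> Chp * (La * (B * \<delta>) + La * Od + A * Z powr q)" using aD Chp(2) by (intro mult_left_mono) auto
          finally show ?thesis by (simp add: g_def)
        qed
        have nnZ: "0 \<le> A * Z powr q" using A(2) by simp
        have "ennreal \<bar>h (X N i t \<omega>) - h (X N i s \<omega>)\<bar> \<le> ennreal (Chp * (La * (B * \<delta>) + La * Od + A * Z powr q))"
          using hD by (rule ennreal_leI)
        also have "\<dots> = ennreal Chp * (ennreal (La * B * \<delta>) + ennreal La * ennreal Od + ennreal A * ppow q (ennreal Z))"
          using Chp(2) La(2) BD Od(1) A(2) Z0 nnZ
          by (simp add: ppow_ennreal ennreal_mult'[symmetric] ennreal_plus[symmetric] mult.assoc del: ennreal_plus)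
        also have "\<dots> \<le> U \<omega>"
        proof -
          define c where "c = real N powr (- 1 / \<alpha>)"
          have c0: "0 \<le> c" by (simp add: c_def)
          have EZ: "ennreal Z \<le> ennreal c * (\<Sum>j\<in>{1..N}. SmS j) + ennreal c * (\<Sum>j\<in>{1..N}. BgS j)"
          proof -
            have "ennreal Z = ennreal c * (\<Sum>j\<in>{1..N} - {i}. ennreal (Cd j))"
              unfolding Z_def c_def using Cd by (subst sum_ennreal) (auto simp: ennreal_mult')
            also have "\<dots> \<le> ennreal c * (\<Sum>j\<in>{1..N}. ennreal (Cd j))"
              by (intro mult_left_mono sum_mono2) auto
            also have "\<dots> \<le> ennreal c * (\<Sum>j\<in>{1..N}. SmS j + BgS j)"
              using Cd by (intro mult_left_mono sum_mono) auto
            finally show ?thesis by (simp add: sum.distrib distrib_left)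
          qed
          have "ppow q (ennreal Z) \<le> ppow q (ennreal c * (\<Sum>j\<in>{1..N}. SmS j)) + ppow q (ennreal c * (\<Sum>j\<in>{1..N}. BgS j))"
            using ppow_mono[OF q(1) EZ] ppow_add[OF q(1) qle1] by (rule order_trans)
          also have "\<dots> \<le> (ennreal (\<epsilon> powr q) + ennreal (\<epsilon> powr (q - 1)) * (ennreal c * (\<Sum>j\<in>{1..N}. SmS j)))
                        + ennreal (real N powr (- q / \<alpha>)) * (\<Sum>j\<in>{1..N}. \<Sum>k. ennreal ((2 ^ Suc k * R) powr q) * Bg j k \<omega>)"
          proof (rule add_mono)
            show "ppow q (ennreal c * (\<Sum>j\<in>{1..N}. SmS j)) \<le> ennreal (\<epsilon> powr q) + ennreal (\<epsilon> powr (q - 1)) * (ennreal c * (\<Sum>j\<in>{1..N}. SmS j))"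
              by (rule ppow_eps[OF q(1) qle1 e0])
            have "ppow q (ennreal c * (\<Sum>j\<in>{1..N}. BgS j)) = ennreal (c powr q) * ppow q (\<Sum>j\<in>{1..N}. BgS j)"
              by (rule ppow_cmult[OF q(1) c0])
            also have "c powr q = real N powr (- q / \<alpha>)" unfolding c_def by (simp add: powr_powr)
            also have "ppow q (\<Sum>j\<in>{1..N}. BgS j) \<le> (\<Sum>j\<in>{1..N}. \<Sum>k. ennreal ((2 ^ Suc k * R) powr q) * Bg j k \<omega>)"
            proof -
              have "ppow q (\<Sum>j\<in>{1..N}. BgS j) \<le> (\<Sum>j\<in>{1..N}. ppow q (BgS j))" by (rule ppow_sum[OF q(1) qle1])
              also have "\<dots> \<le> (\<Sum>j\<in>{1..N}. \<Sum>k. ennreal ((2 ^ Suc k * R) powr q) * Bg j k \<omega>)"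
              proof (rule sum_mono)
                fix j assume j: "j \<in> {1..N}"
                have "ppow q (BgS j) \<le> (\<Sum>k. ppow q (ennreal (2 ^ Suc k * R) * Bg j k \<omega>))"
                  unfolding BgS_def by (rule ppow_suminf[OF q(1) qle1])
                also have "\<dots> \<le> (\<Sum>k. ennreal ((2 ^ Suc k * R) powr q) * Bg j k \<omega>)"
                proof (rule suminf_le)
                  fix k
                  obtain n :: nat where n: "Bg j k \<omega> = of_nat n" using BgNat j by blast
                  have "ppow q (ennreal (2 ^ Suc k * R) * Bg j k \<omega>) = ennreal ((2 ^ Suc k * R) powr q) * ppow q (Bg j k \<omega>)"
                    using R0 by (intro ppow_cmult[OF q(1)]) simp
                  also have "\<dots> \<le> ennreal ((2 ^ Suc k * R) powr q) * Bg j k \<omega>"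
                    unfolding n by (intro mult_left_mono ppow_nat[OF q(1) qle1]) simp
                  finally show "ppow q (ennreal (2 ^ Suc k * R) * Bg j k \<omega>) \<le> ennreal ((2 ^ Suc k * R) powr q) * Bg j k \<omega>" .
                qed auto
                finally show "ppow q (BgS j) \<le> (\<Sum>k. ennreal ((2 ^ Suc k * R) powr q) * Bg j k \<omega>)" .
              qed
              finally show ?thesis .
            qed
            then have "ennreal (real N powr (- q / \<alpha>)) * ppow q (\<Sum>j\<in>{1..N}. BgS j) \<le> ennreal (real N powr (- q / \<alpha>)) * (\<Sum>j\<in>{1..N}. \<Sum>k. ennreal ((2 ^ Suc k * R) powr q) * Bg j k \<omega>)"
              by (rule mult_left_mono) simp
            finally show "ppow q (ennreal c * (\<Sum>j\<in>{1..N}. BgS j)) \<le> ennreal (real N powr (- q / \<alpha>)) * (\<Sum>j\<in>{1..N}. \<Sum>k. ennreal ((2 ^ Suc k * R) powr q) * Bg j k \<omega>)" .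
          qed
          finally have PZ: "ppow q (ennreal Z) \<le> ennreal (\<epsilon> powr q) + ennreal (\<epsilon> powr (q - 1)) * (ennreal c * (\<Sum>j\<in>{1..N}. SmS j))
                        + ennreal (real N powr (- q / \<alpha>)) * (\<Sum>j\<in>{1..N}. \<Sum>k. ennreal ((2 ^ Suc k * R) powr q) * Bg j k \<omega>)"
            by (simp add: add.assoc)
          show ?thesis unfolding U_def SmS_def c_def
            using PZ Od(2) unfolding SmS_def c_def
            by (intro mult_left_mono add_mono order_refl) auto
        qed
        finally show "ennreal \<bar>h (X N i t \<omega>) - h (X N i s \<omega>)\<bar> \<le> U \<omega>" .
      qed
    qed
    have step2: "(\<integral>\<^sup>+ \<omega>. U \<omega> \<partial>M) \<le> ennreal (Cst * \<delta> powr (q / \<alpha>))"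
    proof -
      have mcnt[measurable]: "cnt \<in> borel_measurable M" unfolding cnt_def by (rule Emeas[OF iN]) simp
      have mSm: "Sm j k \<in> borel_measurable M" if "j \<in> {1..N}" for j k unfolding Sm_def by (rule Emeas[OF that]) simp
      have mBg: "Bg j k \<in> borel_measurable M" if "j \<in> {1..N}" for j k unfolding Bg_def by (rule Emeas[OF that]) simp
      define S1 where "S1 \<omega> = (\<Sum>j\<in>{1..N}. \<Sum>k. ennreal (R / 2 ^ k) * Sm j k \<omega>)" for \<omega>
      define S2 where "S2 \<omega> = (\<Sum>j\<in>{1..N}. \<Sum>k. ennreal ((2 ^ Suc k * R) powr q) * Bg j k \<omega>)" for \<omega>
      have mS1j: "(\<lambda>\<omega>. \<Sum>k. ennreal (R / 2 ^ k) * Sm j k \<omega>) \<in> borel_measurable M" if "j \<in> {1..N}" for j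
      proof -
        note [measurable] = mSm[OF that]
        show ?thesis by measurable
      qed
      have mS2j: "(\<lambda>\<omega>. \<Sum>k. ennreal ((2 ^ Suc k * R) powr q) * Bg j k \<omega>) \<in> borel_measurable M" if "j \<in> {1..N}" for j
      proof -
        note [measurable] = mBg[OF that]
        show ?thesis by measurable
      qed
      have mS1[measurable]: "S1 \<in> borel_measurable M" unfolding S1_def by (rule borel_measurable_sum) (rule mS1j)
      have mS2[measurable]: "S2 \<in> borel_measurable M" unfolding S2_def by (rule borel_measurable_sum) (rule mS2j)
      have Ecnt: "(\<integral>\<^sup>+ \<omega>. cnt \<omega> \<partial>M) \<le> ennreal (\<delta> * F)"
      proof -
        have "(\<integral>\<^sup>+ \<omega>. cnt \<omega> \<partial>M) = emeasure (intensity \<nu>) (box {0..})" unfolding cnt_def by (rule Eint[OF iN]) simp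
        also have "\<dots> \<le> ennreal (\<delta> * F) * emeasure \<nu> {0..}" by (rule boxE') simp
        also have "\<dots> \<le> ennreal (\<delta> * F) * 1" by (intro mult_left_mono nuV) simp
        finally show ?thesis by simp
      qed
      have ESm: "(\<integral>\<^sup>+ \<omega>. Sm j k \<omega> \<partial>M) \<le> ennreal (\<delta> * F * c1 * (R / 2 ^ Suc k) powr (- \<alpha>))" if "j \<in> {1..N}" for j k
      proof -
        have "(\<integral>\<^sup>+ \<omega>. Sm j k \<omega> \<partial>M) = emeasure (intensity \<nu>) (box {R / 2 ^ Suc k<..R / 2 ^ k})"
          unfolding Sm_def by (rule Eint[OF that]) simp
        also have "\<dots> \<le> ennreal (\<delta> * F) * emeasure \<nu> {R / 2 ^ Suc k<..R / 2 ^ k}" by (rule boxE') simp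
        also have "\<dots> \<le> ennreal (\<delta> * F) * emeasure \<nu> {R / 2 ^ Suc k<..}"
          using nu(2) by (intro mult_left_mono emeasure_mono) auto
        also have "\<dots> \<le> ennreal (\<delta> * F) * ennreal ((R / 2 ^ Suc k) powr (- \<alpha>) / (1 - exp (- 1)))"
          using R0 by (intro mult_left_mono nu_tail[OF nu]) auto
        also have "\<dots> = ennreal (\<delta> * F * c1 * (R / 2 ^ Suc k) powr (- \<alpha>))"
          using d0 F by (simp add: c1_def ennreal_mult[symmetric] del: ennreal_mult)
        finally show ?thesis .
      qed
      have EBg: "(\<integral>\<^sup>+ \<omega>. Bg j k \<omega> \<partial>M) \<le> ennreal (\<delta> * F * c1 * (2 ^ k * R) powr (- \<alpha>))" if "j \<in> {1..N}" for j k
      proof -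
        have "(\<integral>\<^sup>+ \<omega>. Bg j k \<omega> \<partial>M) = emeasure (intensity \<nu>) (box {2 ^ k * R<..2 ^ Suc k * R})"
          unfolding Bg_def by (rule Eint[OF that]) simp
        also have "\<dots> \<le> ennreal (\<delta> * F) * emeasure \<nu> {2 ^ k * R<..2 ^ Suc k * R}" by (rule boxE') simp
        also have "\<dots> \<le> ennreal (\<delta> * F) * emeasure \<nu> {2 ^ k * R<..}"
          using nu(2) by (intro mult_left_mono emeasure_mono) auto
        also have "\<dots> \<le> ennreal (\<delta> * F) * ennreal ((2 ^ k * R) powr (- \<alpha>) / (1 - exp (- 1)))"
          using R0 by (intro mult_left_mono nu_tail[OF nu]) auto
        also have "\<dots> = ennreal (\<delta> * F * c1 * (2 ^ k * R) powr (- \<alpha>))"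
          using d0 F by (simp add: c1_def ennreal_mult[symmetric] del: ennreal_mult)
        finally show ?thesis .
      qed
      have c0: "0 \<le> \<delta> * F * c1" using d0 F c1 by simp
      have ES1: "(\<integral>\<^sup>+ \<omega>. S1 \<omega> \<partial>M) \<le> of_nat N * ennreal (\<delta> * F * c1 * (R powr (1 - \<alpha>) * 2 powr \<alpha>) / (1 - 2 powr (\<alpha> - 1)))"
      proof -
        have "(\<integral>\<^sup>+ \<omega>. S1 \<omega> \<partial>M) = (\<Sum>j\<in>{1..N}. \<integral>\<^sup>+ \<omega>. (\<Sum>k. ennreal (R / 2 ^ k) * Sm j k \<omega>) \<partial>M)"
          unfolding S1_def by (rule nn_integral_sum) (rule mS1j)
        also have "\<dots> = (\<Sum>j\<in>{1..N}. \<Sum>k. ennreal (R / 2 ^ k) * (\<integral>\<^sup>+ \<omega>. Sm j k \<omega> \<partial>M))"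
        proof (rule sum.cong[OF refl])
          fix j assume j: "j \<in> {1..N}"
          note [measurable] = mSm[OF j]
          show "(\<integral>\<^sup>+ \<omega>. (\<Sum>k. ennreal (R / 2 ^ k) * Sm j k \<omega>) \<partial>M) = (\<Sum>k. ennreal (R / 2 ^ k) * (\<integral>\<^sup>+ \<omega>. Sm j k \<omega> \<partial>M))"
            by (subst nn_integral_suminf) (auto intro!: suminf_cong nn_integral_cmult)
        qed
        also have "\<dots> \<le> (\<Sum>j\<in>{1..N}. \<Sum>k. ennreal (R / 2 ^ k) * ennreal (\<delta> * F * c1 * (R / 2 ^ Suc k) powr (- \<alpha>)))"
          using ESm by (intro sum_mono suminf_le mult_left_mono) auto
        also have "\<dots> = of_nat N * ennreal (\<delta> * F * c1 * (R powr (1 - \<alpha>) * 2 powr \<alpha>) / (1 - 2 powr (\<alpha> - 1)))"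
          using small_series[OF R0 alpha c0] by simp
        finally show ?thesis .
      qed
      have ES2: "(\<integral>\<^sup>+ \<omega>. S2 \<omega> \<partial>M) \<le> of_nat N * ennreal (\<delta> * F * c1 * (2 powr q * R powr (q - \<alpha>)) / (1 - 2 powr (q - \<alpha>)))"
      proof -
        have "(\<integral>\<^sup>+ \<omega>. S2 \<omega> \<partial>M) = (\<Sum>j\<in>{1..N}. \<integral>\<^sup>+ \<omega>. (\<Sum>k. ennreal ((2 ^ Suc k * R) powr q) * Bg j k \<omega>) \<partial>M)"
          unfolding S2_def by (rule nn_integral_sum) (rule mS2j)
        also have "\<dots> = (\<Sum>j\<in>{1..N}. \<Sum>k. ennreal ((2 ^ Suc k * R) powr q) * (\<integral>\<^sup>+ \<omega>. Bg j k \<omega> \<partial>M))"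
        proof (rule sum.cong[OF refl])
          fix j assume j: "j \<in> {1..N}"
          note [measurable] = mBg[OF j]
          show "(\<integral>\<^sup>+ \<omega>. (\<Sum>k. ennreal ((2 ^ Suc k * R) powr q) * Bg j k \<omega>) \<partial>M) = (\<Sum>k. ennreal ((2 ^ Suc k * R) powr q) * (\<integral>\<^sup>+ \<omega>. Bg j k \<omega> \<partial>M))"
            by (subst nn_integral_suminf) (auto intro!: suminf_cong nn_integral_cmult)
        qed
        also have "\<dots> \<le> (\<Sum>j\<in>{1..N}. \<Sum>k. ennreal ((2 ^ Suc k * R) powr q) * ennreal (\<delta> * F * c1 * (2 ^ k * R) powr (- \<alpha>)))"
          using EBg by (intro sum_mono suminf_le mult_left_mono) auto
        also have "\<dots> = of_nat N * ennreal (\<delta> * F * c1 * (2 powr q * R powr (q - \<alpha>)) / (1 - 2 powr (q - \<alpha>)))"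
          using big_series[OF R0 q(2) c0] by simp
        finally show ?thesis .
      qed
      define X1 where "X1 = \<delta> * F * c1 * (R powr (1 - \<alpha>) * 2 powr \<alpha>) / (1 - 2 powr (\<alpha> - 1))"
      define X2 where "X2 = \<delta> * F * c1 * (2 powr q * R powr (q - \<alpha>)) / (1 - 2 powr (q - \<alpha>))"
      have X1e: "X1 = (\<delta> * F * c1) * R powr (1 - \<alpha>) * K1" by (simp add: X1_def K1_def)
      have X2e: "X2 = (\<delta> * F * c1) * R powr (q - \<alpha>) * K2" by (simp add: X2_def K2_def)
      have X1: "0 \<le> X1" unfolding X1e using c0 K1 by simp
      have X2: "0 \<le> X2" unfolding X2e using c0 K2 by simp
      have U_eq: "U = (\<lambda>\<omega>. ennreal Chp * (ennreal (La * B * \<delta>) + ennreal La * (ennreal P0 * cnt \<omega>)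
         + ennreal A * (ennreal (\<epsilon> powr q) + ennreal (\<epsilon> powr (q - 1)) * (ennreal (real N powr (- 1 / \<alpha>)) * S1 \<omega>)
                        + ennreal (real N powr (- q / \<alpha>)) * S2 \<omega>)))"
        by (simp add: U_def S1_def S2_def fun_eq_iff)
      have "(\<integral>\<^sup>+ \<omega>. U \<omega> \<partial>M) = ennreal Chp * (ennreal (La * B * \<delta>) * 1 + ennreal La * (ennreal P0 * (\<integral>\<^sup>+ \<omega>. cnt \<omega> \<partial>M))
         + ennreal A * (ennreal (\<epsilon> powr q) * 1 + ennreal (\<epsilon> powr (q - 1)) * (ennreal (real N powr (- 1 / \<alpha>)) * (\<integral>\<^sup>+ \<omega>. S1 \<omega> \<partial>M))
                        + ennreal (real N powr (- q / \<alpha>)) * (\<integral>\<^sup>+ \<omega>. S2 \<omega> \<partial>M)))"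
        unfolding U_eq by (subst nn_integral_combo) (simp_all add: P.emeasure_space_1)
      also have "\<dots> \<le> ennreal Chp * (ennreal (La * B * \<delta>) * 1 + ennreal La * (ennreal P0 * ennreal (\<delta> * F))
         + ennreal A * (ennreal (\<epsilon> powr q) * 1 + ennreal (\<epsilon> powr (q - 1)) * (ennreal (real N powr (- 1 / \<alpha>)) * (of_nat N * ennreal X1))
                        + ennreal (real N powr (- q / \<alpha>)) * (of_nat N * ennreal X2)))"
        using Ecnt ES1 ES2 unfolding X1_def X2_def
        by (intro mult_left_mono add_mono order_refl) auto
      also have "\<dots> = ennreal (Chp * (La * B * \<delta> + La * (P0 * (\<delta> * F))
         + A * (\<epsilon> powr q + \<epsilon> powr (q - 1) * (real N powr (- 1 / \<alpha>) * (real N * X1))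
                        + real N powr (- q / \<alpha>) * (real N * X2))))"
        using Chp La B P0 d0 F A X1 X2
        by (simp add: ennreal_of_nat_eq_real_of_nat ennreal_mult'[symmetric] ennreal_plus[symmetric] del: ennreal_plus)
      also have "\<dots> \<le> ennreal (Cst * \<delta> powr (q / \<alpha>))"
      proof (rule ennreal_leI)
        have dq: "\<delta> \<le> \<delta> powr (q / \<alpha>)"
        proof -
          have "\<delta> powr 1 \<le> \<delta> powr (q / \<alpha>)" using d0 q alpha by (intro powr_mono') auto
          then show ?thesis using d0 by simp
        qed
        have eq0: "\<epsilon> powr q = \<delta> powr (q / \<alpha>)" using d0 by (simp add: \<epsilon>_def powr_powr)
        have eq1: "\<epsilon> powr (q - 1) * (real N powr (- 1 / \<alpha>) * (real N * X1)) = F * c1 * K1 * \<delta> powr (q / \<alpha>)"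
        proof -
          have "real N powr (- 1 / \<alpha>) * (real N * X1) = F * c1 * K1 * (real N powr (- 1 / \<alpha>) * real N * \<delta> * R powr (1 - \<alpha>))"
            by (simp add: X1_def K1_def)
          also have "real N powr (- 1 / \<alpha>) * real N * \<delta> * R powr (1 - \<alpha>) = \<delta> powr (1 / \<alpha>)"
            unfolding R_def by (rule t3[OF Npos d0(1) alpha(1)])
          finally have "real N powr (- 1 / \<alpha>) * (real N * X1) = F * c1 * K1 * \<delta> powr (1 / \<alpha>)" .
          moreover have "\<epsilon> powr (q - 1) * \<delta> powr (1 / \<alpha>) = \<delta> powr (q / \<alpha>)"
            using d0 alpha by (simp add: \<epsilon>_def powr_powr powr_add[symmetric] diff_divide_distrib[symmetric] add_divide_distrib[symmetric])
          ultimately show ?thesis by (metis mult.assoc mult.commute)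
        qed
        have eq2: "real N powr (- q / \<alpha>) * (real N * X2) = F * c1 * K2 * \<delta> powr (q / \<alpha>)"
        proof -
          have "real N powr (- q / \<alpha>) * (real N * X2) = F * c1 * K2 * (real N powr (- q / \<alpha>) * real N * \<delta> * R powr (q - \<alpha>))"
            by (simp add: X2_def K2_def)
          also have "real N powr (- q / \<alpha>) * real N * \<delta> * R powr (q - \<alpha>) = \<delta> powr (q / \<alpha>)"
            unfolding R_def by (rule t4[OF Npos d0(1) alpha(1)])
          finally show ?thesis .
        qed
        have "Chp * (La * B * \<delta> + La * (P0 * (\<delta> * F)) + A * (\<epsilon> powr q + \<epsilon> powr (q - 1) * (real N powr (- 1 / \<alpha>) * (real N * X1))
                        + real N powr (- q / \<alpha>) * (real N * X2)))
          = Chp * ((La * B + La * P0 * F) * \<delta> + A * (1 + F * c1 * K1 + F * c1 * K2) * \<delta> powr (q / \<alpha>))"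
          unfolding eq0 eq1 eq2 by (simp add: algebra_simps)
        also have "\<dots> \<le> Chp * ((La * B + La * P0 * F) * \<delta> powr (q / \<alpha>) + A * (1 + F * c1 * K1 + F * c1 * K2) * \<delta> powr (q / \<alpha>))"
          using La B P0 F Chp dq by (intro mult_left_mono add_mono mult_left_mono order_refl) auto
        also have "\<dots> = Cst * \<delta> powr (q / \<alpha>)" by (simp add: Cst_def algebra_simps)
        finally show "Chp * (La * B * \<delta> + La * (P0 * (\<delta> * F)) + A * (\<epsilon> powr q + \<epsilon> powr (q - 1) * (real N powr (- 1 / \<alpha>) * (real N * X1))
                        + real N powr (- q / \<alpha>) * (real N * X2))) \<le> Cst * \<delta> powr (q / \<alpha>)" .
      qed
      finally show ?thesis .
    qed
    show ?thesis using order_trans[OF nn_integral_mono_AE[OF step1] step2] by (simp add: \<delta>_def)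
  qed
  show ?thesis
  proof (intro exI[of _ Cst] allI impI ballI)
    fix N i :: nat and s t :: real assume N: "1 \<le> N" and i: "i \<in> {1..N}" and s: "0 \<le> s" and t: "0 \<le> t" and d: "\<bar>s - t\<bar> \<le> 1"
    consider "s < t" | "s = t" | "t < s" using less_linear by blast
    then show "(\<integral>\<^sup>+ \<omega>. ennreal \<bar>h (X N i t \<omega>) - h (X N i s \<omega>)\<bar> \<partial>M) \<le> ennreal (Cst * \<bar>t - s\<bar> powr (q / \<alpha>))"
    proof cases
      case 1 then show ?thesis using core[OF N i s 1] d by simp
    next
      case 2 then show ?thesis by simp
    next
      case 3
      have "(\<integral>\<^sup>+ \<omega>. ennreal \<bar>h (X N i t \<omega>) - h (X N i s \<omega>)\<bar> \<partial>M) = (\<integral>\<^sup>+ \<omega>. ennreal \<bar>h (X N i s \<omega>) - h (X N i t \<omega>)\<bar> \<partial>M)"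
        by (simp add: abs_minus_commute)
      also have "\<dots> \<le> ennreal (Cst * (s - t) powr (q / \<alpha>))" using core[OF N i t 3] d by simp
      finally show ?thesis using 3 by simp
    qed
  qed
qed


end
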